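(* For $n\ge2$ and $u_1,\dots,u_n\in\mathcal B$, the free cumulant satisfies $R_n[X(u_1),\dots,X(u_n)]=\sum_{\pi\in\widetilde{\mathrm{NC}}_{ns}(n)}\langle W_C(\pi)\Omega,\Omega\rangle_{\gamma,\phi}$, and for $n=1$ the free cumulant $R_1[X(u_1)]$ is zero.
   Context: Let $\mathcal B$ be a unital $*$-algebra with star-linear maps $\phi:\mathcal B\to\mathbb C$, $\gamma:\mathcal B\to\mathcal B$, $\Lambda:\mathcal B\otimes_{alg}\mathcal B\to\mathcal B$, where $\phi$ is positive and faithful and $\gamma+\phi$ is completely positive, with $(\gamma+\phi)[b]:=\gamma[b]+\phi[b]1_{\mathcal B}$. Assume $\phi[v^*\Lambda(b\otimes u)]=\phi[\Lambda(b^*\otimes v)^*u]$ and $\gamma[v^*\Lambda(b\otimes u)]=\gamma[\Lambda(b^*\otimes v)^*u]$ for all $b,u,v$. On $\mathcal F_{alg}(\mathcal B)=\mathbb C\Omega\oplus\bigoplus_{n\ge1}\mathcal B^{\otimes n}$ use the form $\langle\Omega,\Omega\rangle_{\gamma,\phi}=1$, $\langle u_1\otimes\cdots\otimes u_n,v_1\otimes\cdots\otimes v_k\rangle_{\gamma,\phi}=\delta_{n=k}\phi[v_n^*(\gamma+\phi)[v_{n-1}^*\cdots(\gamma+\phi)[v_1^*u_1]\cdots u_{n-1}]u_n]$. For $b\in\mathcal B$: $a^+(b)\Omega=b$, $a^+(b)(u_1\otimes\cdots\otimes u_n)=b\otimes u_1\otimes\cdots\otimes u_n$; $a^-(b)\Omega=0$,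 $a^-(b)u_1=\phi[bu_1]\Omega$, $a^-(b)(u_1\otimes\cdots\otimes u_n)=(\gamma+\phi)[bu_1]u_2\otimes\cdots\otimes u_n$ ($n\ge2$); $a^0(b)\Omega=0$, $a^0(b)(u_1\otimes\cdots\otimes u_n)=\Lambda(b\otimes u_1)\otimes u_2\otimes\cdots\otimes u_n$; $X(b)=a^+(b)+a^-(b)+a^0(b)$. Further define $a^\sim_\gamma(b)$ by $a^\sim_\gamma(b)(u_1\otimes\cdots\otimes u_n)=\gamma[bu_1]u_2\otimes\cdots\otimes u_n$ for $n\ge2$, $a^\sim_\gamma(b)u_1=0$, $a^\sim_\gamma(b)\Omega=0$; and $a^\sim_\phi(b)$ by $a^\sim_\phi(b)(u_1\otimes\cdots\otimes u_n)=\phi[bu_1]u_2\otimes\cdots\otimes u_n$ for $n\ge2$, $a^\sim_\phi(b)u_1=\phi[bu_1]\Omega$, $a^\sim_\phi(b)\Omega=0$. Free cumulants $R_k$ with respect to $\psi(A)=\langle A\Omega,\Omega\rangle_{\gamma,\phi}$ are the multilinear functionals defined by $\psi[Y_1\cdots Y_n]=\sum_{\pi\in\mathrm{NC}(n)}\prod_{V\in\pi}R_{|V|}[Y_{V(1)},\dots,Y_{V(|V|)}]$ ($\mathrm{NC}(n)$: noncrossing partitions of $\{1,\dots,n\}$). $\widetilde{\mathrm{NC}}_{ns}(n)$: noncrossing partitions with no singletons in which $1$ and $n$ are in the same block. In a block the smallest element is opening, the largest closing, the others middle. For $\pi\in\widetilde{\mathrm{NC}}_{ns}(n)$, $W_C(\pi)=a_1(u_1)\cdots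 a_n(u_n)$, where $a_i=a^+$ if $i$ is closing, $a_i=a^\sim_\phi$ if $i=1$, $a_i=a^\sim_\gamma$ if $i\ne1$ is opening, $a_i=a^0$ if $i$ is middle. *)

theory Defs
  imports Complex_Main "HOL-Library.Disjoint_Sets"
begin

definition unital_star_algebra :: "(complex \<Rightarrow> 'b::ring_1 \<Rightarrow> 'b) \<Rightarrow> ('b \<Rightarrow> 'b) \<Rightarrow> bool" where
  "unital_star_algebra sc st \<longleftrightarrow>
     vector_space sc \<and>
     (\<forall>c x y. sc c (x * y) = sc c x * y \<and> sc c (x * y) = x * sc c y) \<and>
     (\<forall>x. st (st x) = x) \<and>
     (\<forall>x y. st (x + y) = st x + st y) \<and>
     (\<forall>c x. st (sc c x) = sc (cnj c) (st x)) \<and>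
     (\<forall>x y. st (x * y) = st y * st x)"

text \<open>(gamma + phi)[b] = gamma[b] + phi[b] 1\<close>
definition gpp :: "(complex \<Rightarrow> 'b::ring_1 \<Rightarrow> 'b) \<Rightarrow> ('b \<Rightarrow> complex) \<Rightarrow> ('b \<Rightarrow> 'b) \<Rightarrow> 'b \<Rightarrow> 'b" where
  "gpp sc \<phi> \<gamma> b = \<gamma> b + sc (\<phi> b) 1"

text \<open>Positive elements of M_n(B): the matrix (M i j) (i,j < n) is a finite sum of A^* A.\<close>
definition pos_matrix :: "('b::ring_1 \<Rightarrow> 'b) \<Rightarrow> nat \<Rightarrow> (nat \<Rightarrow> nat \<Rightarrow> 'b) \<Rightarrow> bool" where
  "pos_matrix st n M \<longleftrightarrow>
     (\<exists>(m::nat) (A :: nat \<Rightarrow> nat \<Rightarrow> nat \<Rightarrow> 'b).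
        \<forall>i<n. \<forall>j<n. M i j = (\<Sum>k<m. \<Sum>l<n. st (A k l i) * A k l j))"

definition completely_positive :: "('b::ring_1 \<Rightarrow> 'b) \<Rightarrow> ('b \<Rightarrow> 'b) \<Rightarrow> bool" where
  "completely_positive st T \<longleftrightarrow>
     (\<forall>n (b :: nat \<Rightarrow> 'b). pos_matrix st n (\<lambda>i j. T (st (b i) * b j)))"

text \<open>Vectors of F_alg(B) are represented by formal finite linear combinations of
words; the empty word is the vacuum Omega, a word [u1,...,un] is u1 \<otimes> ... \<otimes> un.
Operators act on vectors; they are defined on words and extended linearly.\<close>

type_synonym 'b fvec = "(complex \<times> 'b list) list"

definition vac :: "'b fvec" where "vac = [(1, [])]"

definition lift :: "('b list \<Rightarrow> 'b fvec) \<Rightarrow> 'b fvec \<Rightarrow> 'b fvec" where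
  "lift f v = concat (map (\<lambda>(c, w). map (\<lambda>(d, w'). (c * d, w')) (f w)) v)"

fun tacc :: "(complex \<Rightarrow> 'b::ring_1 \<Rightarrow> 'b) \<Rightarrow> ('b \<Rightarrow> 'b) \<Rightarrow> ('b \<Rightarrow> complex) \<Rightarrow> ('b \<Rightarrow> 'b)
             \<Rightarrow> 'b \<Rightarrow> 'b list \<Rightarrow> 'b list \<Rightarrow> 'b" where
  "tacc sc st \<phi> \<gamma> t (u # us) (v # vs) = tacc sc st \<phi> \<gamma> (st v * gpp sc \<phi> \<gamma> t * u) us vs"
| "tacc sc st \<phi> \<gamma> t _ _ = t"

text \<open>The form on words:
 <u1..un, v1..vk> = delta_{n=k} phi[v_n^* (gamma+phi)[v_{n-1}^* ... (gamma+phi)[v_1^* u_1] ... u_{n-1}] u_n],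
 <Omega,Omega> = 1.\<close>
fun form_word :: "(complex \<Rightarrow> 'b::ring_1 \<Rightarrow> 'b) \<Rightarrow> ('b \<Rightarrow> 'b) \<Rightarrow> ('b \<Rightarrow> complex) \<Rightarrow> ('b \<Rightarrow> 'b)
                  \<Rightarrow> 'b list \<Rightarrow> 'b list \<Rightarrow> complex" where
  "form_word sc st \<phi> \<gamma> [] [] = 1"
| "form_word sc st \<phi> \<gamma> (u # us) (v # vs) =
     (if length us = length vs then \<phi> (tacc sc st \<phi> \<gamma> (st v * u) us vs) else 0)"
| "form_word sc st \<phi> \<gamma> _ _ = 0"

definition form :: "(complex \<Rightarrow> 'b::ring_1 \<Rightarrow> 'b) \<Rightarrow> ('b \<Rightarrow> 'b) \<Rightarrow> ('b \<Rightarrow> complex) \<Rightarrow> ('b \<Rightarrow> 'b)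
                  \<Rightarrow> 'b fvec \<Rightarrow> 'b fvec \<Rightarrow> complex" where
  "form sc st \<phi> \<gamma> x y =
     (\<Sum>(c, w)\<leftarrow>x. \<Sum>(d, w')\<leftarrow>y. c * cnj d * form_word sc st \<phi> \<gamma> w w')"

definition vstate :: "(complex \<Rightarrow> 'b::ring_1 \<Rightarrow> 'b) \<Rightarrow> ('b \<Rightarrow> 'b) \<Rightarrow> ('b \<Rightarrow> complex) \<Rightarrow> ('b \<Rightarrow> 'b)
                  \<Rightarrow> ('b fvec \<Rightarrow> 'b fvec) \<Rightarrow> complex" where
  "vstate sc st \<phi> \<gamma> A = form sc st \<phi> \<gamma> (A vac) vac"

fun ap_w :: "'b \<Rightarrow> 'b list \<Rightarrow> 'b fvec" where
  "ap_w b w = [(1, b # w)]"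

fun am_w :: "(complex \<Rightarrow> 'b::ring_1 \<Rightarrow> 'b) \<Rightarrow> ('b \<Rightarrow> complex) \<Rightarrow> ('b \<Rightarrow> 'b) \<Rightarrow> 'b \<Rightarrow> 'b list \<Rightarrow> 'b fvec" where
  "am_w sc \<phi> \<gamma> b [] = []"
| "am_w sc \<phi> \<gamma> b [u] = [(\<phi> (b * u), [])]"
| "am_w sc \<phi> \<gamma> b (u1 # u2 # us) = [(1, gpp sc \<phi> \<gamma> (b * u1) * u2 # us)]"

fun a0_w :: "('b \<Rightarrow> 'b \<Rightarrow> 'b) \<Rightarrow> 'b \<Rightarrow> 'b list \<Rightarrow> 'b fvec" where
  "a0_w \<Lambda> b [] = []"
| "a0_w \<Lambda> b (u # us) = [(1, \<Lambda> b u # us)]"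

fun atg_w :: "('b::ring_1 \<Rightarrow> 'b) \<Rightarrow> 'b \<Rightarrow> 'b list \<Rightarrow> 'b fvec" where
  "atg_w \<gamma> b (u1 # u2 # us) = [(1, \<gamma> (b * u1) * u2 # us)]"
| "atg_w \<gamma> b _ = []"

fun atp_w :: "(complex \<Rightarrow> 'b::ring_1 \<Rightarrow> 'b) \<Rightarrow> ('b \<Rightarrow> complex) \<Rightarrow> 'b \<Rightarrow> 'b list \<Rightarrow> 'b fvec" where
  "atp_w sc \<phi> b [] = []"
| "atp_w sc \<phi> b [u] = [(\<phi> (b * u), [])]"
| "atp_w sc \<phi> b (u1 # u2 # us) = [(1, sc (\<phi> (b * u1)) u2 # us)]"

definition a_plus :: "'b \<Rightarrow> 'b fvec \<Rightarrow> 'b fvec" where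
  "a_plus b = lift (ap_w b)"
definition a_minus :: "(complex \<Rightarrow> 'b::ring_1 \<Rightarrow> 'b) \<Rightarrow> ('b \<Rightarrow> complex) \<Rightarrow> ('b \<Rightarrow> 'b) \<Rightarrow> 'b \<Rightarrow> 'b fvec \<Rightarrow> 'b fvec" where
  "a_minus sc \<phi> \<gamma> b = lift (am_w sc \<phi> \<gamma> b)"
definition a_zero :: "('b \<Rightarrow> 'b \<Rightarrow> 'b) \<Rightarrow> 'b \<Rightarrow> 'b fvec \<Rightarrow> 'b fvec" where
  "a_zero \<Lambda> b = lift (a0_w \<Lambda> b)"
definition a_tilde_gamma :: "('b::ring_1 \<Rightarrow> 'b) \<Rightarrow> 'b \<Rightarrow> 'b fvec \<Rightarrow> 'b fvec" where
  "a_tilde_gamma \<gamma> b = lift (atg_w \<gamma> b)"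
definition a_tilde_phi :: "(complex \<Rightarrow> 'b::ring_1 \<Rightarrow> 'b) \<Rightarrow> ('b \<Rightarrow> complex) \<Rightarrow> 'b \<Rightarrow> 'b fvec \<Rightarrow> 'b fvec" where
  "a_tilde_phi sc \<phi> b = lift (atp_w sc \<phi> b)"

text \<open>X(b) = a^+(b) + a^-(b) + a^0(b) (sum of vectors = concatenation of formal sums)\<close>
definition Xop :: "(complex \<Rightarrow> 'b::ring_1 \<Rightarrow> 'b) \<Rightarrow> ('b \<Rightarrow> complex) \<Rightarrow> ('b \<Rightarrow> 'b) \<Rightarrow> ('b \<Rightarrow> 'b \<Rightarrow> 'b)
                 \<Rightarrow> 'b \<Rightarrow> 'b fvec \<Rightarrow> 'b fvec" where
  "Xop sc \<phi> \<gamma> \<Lambda> b v = a_plus b v @ a_minus sc \<phi> \<gamma> b v @ a_zero \<Lambda> b v"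

text \<open>Product of operators Y1 ... Yn (Yn acts first).\<close>
definition opprod :: "('x \<Rightarrow> 'x) list \<Rightarrow> 'x \<Rightarrow> 'x" where
  "opprod Ys = foldr (\<circ>) Ys id"

section \<open>Noncrossing partitions (of {0..<n}, i.e. {1..n} shifted by one)\<close>

definition noncrossing :: "nat set set \<Rightarrow> bool" where
  "noncrossing \<pi> \<longleftrightarrow>
     (\<forall>V\<in>\<pi>. \<forall>W\<in>\<pi>. V \<noteq> W \<longrightarrow>
        \<not> (\<exists>a b c d. a < b \<and> b < c \<and> c < d \<and> a \<in> V \<and> c \<in> V \<and> b \<in> W \<and> d \<in> W))"

definition NC :: "nat \<Rightarrow> nat set set set" where
  "NC n = {\<pi>. partition_on {0..<n} \<pi> \<and> noncrossing \<pi>}"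

definition NC_tilde_ns :: "nat \<Rightarrow> nat set set set" where
  "NC_tilde_ns n = {\<pi> \<in> NC n. (\<forall>V\<in>\<pi>. card V \<noteq> 1) \<and> (\<exists>V\<in>\<pi>. 0 \<in> V \<and> n - 1 \<in> V)}"

lemma length_nths_less:
  assumes "V \<subset> {0..<length Ys}"
  shows "length (nths Ys V) < length Ys"
proof -
  have "{i. i < length Ys \<and> i \<in> V} = V" using assms by auto
  hence "length (nths Ys V) = card V" by (simp add: length_nths)
  also have "\<dots> < card {0..<length Ys}" using assms by (intro psubset_card_mono) auto
  finally show ?thesis by simp
qed

text \<open>The free cumulants with respect to psi, determined recursively by the
moment--cumulant formula psi[Y1...Yn] = sum over pi in NC(n) of prod over blocks
V of R_|V|[Y_V] (the guard on V is always satisfied for blocks of a partition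
different from the one-block partition).\<close>
function cumulant :: "(('x \<Rightarrow> 'x) \<Rightarrow> complex) \<Rightarrow> ('x \<Rightarrow> 'x) list \<Rightarrow> complex" where
  "cumulant \<psi> Ys =
     \<psi> (opprod Ys) -
     (\<Sum>\<pi> \<in> NC (length Ys) - {{{0..<length Ys}}}.
        \<Prod>V\<in>\<pi>. (if V \<subset> {0..<length Ys} then cumulant \<psi> (nths Ys V) else 0))"
  by pat_completeness auto
termination
  by (relation "measure (\<lambda>(\<psi>, Ys). length Ys)") (auto simp: length_nths_less)

definition is_closing :: "nat set set \<Rightarrow> nat \<Rightarrow> bool" where
  "is_closing \<pi> i \<longleftrightarrow> (\<exists>V\<in>\<pi>. i \<in> V \<and> i = Max V)"
definition is_opening :: "nat set set \<Rightarrow> nat \<Rightarrow> bool" where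
  "is_opening \<pi> i \<longleftrightarrow> (\<exists>V\<in>\<pi>. i \<in> V \<and> i = Min V)"

definition WC :: "(complex \<Rightarrow> 'b::ring_1 \<Rightarrow> 'b) \<Rightarrow> ('b \<Rightarrow> complex) \<Rightarrow> ('b \<Rightarrow> 'b) \<Rightarrow> ('b \<Rightarrow> 'b \<Rightarrow> 'b)
                \<Rightarrow> nat \<Rightarrow> nat set set \<Rightarrow> (nat \<Rightarrow> 'b) \<Rightarrow> 'b fvec \<Rightarrow> 'b fvec" where
  "WC sc \<phi> \<gamma> \<Lambda> n \<pi> u =
     opprod (map (\<lambda>i. if is_closing \<pi> i then a_plus (u i)
                      else if i = 0 then a_tilde_phi sc \<phi> (u i)
                      else if is_opening \<pi> i then a_tilde_gamma \<gamma> (u i)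
                      else a_zero \<Lambda> (u i)) [0..<n])"

end

theory Submission
  imports Defs
begin

datatype st4 = CL | MD | OG | OF

lemma UNIV_st4: "(UNIV :: st4 set) = {CL, MD, OG, OF}"
  by (auto intro: st4.exhaust)

lemma finite_UNIV_st4[simp]: "finite (UNIV :: st4 set)"
  by (simp add: UNIV_st4)

lemma opprod_Nil[simp]: "opprod [] = id" by (simp add: opprod_def)
lemma opprod_Cons[simp]: "opprod (f # fs) = f \<circ> opprod fs" by (simp add: opprod_def)

lemma lift_Nil[simp]: "lift f [] = []" by (simp add: lift_def)
lemma lift_Cons[simp]: "lift f ((a, w) # v) = map (\<lambda>(d, w'). (a * d, w')) (f w) @ lift f v"
  by (simp add: lift_def)
lemma lift_append[simp]: "lift f (v1 @ v2) = lift f v1 @ lift f v2"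
  by (simp add: lift_def)

definition Lg :: "('b list \<Rightarrow> complex) \<Rightarrow> 'b fvec \<Rightarrow> complex" where
  "Lg g v = sum_list (map (\<lambda>(a, w). a * g w) v)"

lemma Lg_Nil[simp]: "Lg g [] = 0" by (simp add: Lg_def)
lemma Lg_Cons[simp]: "Lg g ((a, w) # v) = a * g w + Lg g v" by (simp add: Lg_def)
lemma Lg_append[simp]: "Lg g (v1 @ v2) = Lg g v1 + Lg g v2" by (simp add: Lg_def)
lemma Lg_map_scale: "Lg g (map (\<lambda>(d, w'). (a * d, w')) l) = a * Lg g l"
  by (induction l) (auto simp: algebra_simps)
lemma Lg_lift: "Lg g (lift f v) = Lg (\<lambda>w. Lg g (f w)) v"
  by (induction v) (auto simp: Lg_map_scale)
lemma Lg_add_fun: "Lg (\<lambda>w. g1 w + g2 w) v = Lg g1 v + Lg g2 v"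
  by (induction v) (auto simp: algebra_simps)
lemma Lg_zero[simp]: "Lg (\<lambda>w. 0) v = 0"
  by (induction v) auto
lemma Lg_sum_fun: "finite A \<Longrightarrow> Lg (\<lambda>w. \<Sum>s\<in>A. g s w) v = (\<Sum>s\<in>A. Lg (g s) v)"
  by (induction A rule: finite_induct) (auto simp: Lg_add_fun)

definition cf0 :: "'b list \<Rightarrow> complex" where "cf0 w = (if w = [] then 1 else 0)"

locale fock =
  fixes sc :: "complex \<Rightarrow> 'b::ring_1 \<Rightarrow> 'b" and st :: "'b \<Rightarrow> 'b"
    and \<phi> :: "'b \<Rightarrow> complex" and \<gamma> :: "'b \<Rightarrow> 'b" and \<Lambda> :: "'b \<Rightarrow> 'b \<Rightarrow> 'b"
  assumes sc_add: "sc a (x + y) = sc a x + sc a y"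
    and sc_ladd: "sc (a + b) x = sc a x + sc b x"
    and sc_sc: "sc a (sc b x) = sc (a * b) x"
    and sc_one: "sc 1 x = x"
    and sc_ml: "sc a (x * y) = sc a x * y"
    and sc_mr: "sc a (x * y) = x * sc a y"
    and phi_add: "\<phi> (x + y) = \<phi> x + \<phi> y"
    and phi_sc: "\<phi> (sc a x) = a * \<phi> x"
    and gam_add: "\<gamma> (x + y) = \<gamma> x + \<gamma> y"
    and gam_sc: "\<gamma> (sc a x) = sc a (\<gamma> x)"
    and lam_add: "\<Lambda> bb (x + y) = \<Lambda> bb x + \<Lambda> bb y"
    and lam_sc: "\<Lambda> bb (sc a x) = sc a (\<Lambda> bb x)"
begin

fun stp :: "st4 \<Rightarrow> 'b \<Rightarrow> 'b list \<Rightarrow> (complex \<times> 'b list) option" where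
  "stp CL b w = Some (1, b # w)"
| "stp MD b [] = None"
| "stp MD b (x # r) = Some (1, \<Lambda> b x # r)"
| "stp OG b (x # y # r) = Some (1, \<gamma> (b * x) * y # r)"
| "stp OG b [] = None"
| "stp OG b [x] = None"
| "stp OF b [] = None"
| "stp OF b [x] = Some (\<phi> (b * x), [])"
| "stp OF b (x # y # r) = Some (1, sc (\<phi> (b * x)) y # r)"

definition stl :: "st4 \<Rightarrow> 'b \<Rightarrow> 'b list \<Rightarrow> 'b fvec" where
  "stl s b w = (case stp s b w of None \<Rightarrow> [] | Some p \<Rightarrow> [p])"

definition opw :: "st4 \<Rightarrow> 'b \<Rightarrow> 'b fvec \<Rightarrow> 'b fvec" where
  "opw s b = lift (stl s b)"

lemma opw_CL: "opw CL b = a_plus b"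
proof -
  have "stl CL b = ap_w b" by (rule ext) (simp add: stl_def)
  thus ?thesis by (simp add: opw_def a_plus_def)
qed

lemma opw_MD: "opw MD b = a_zero \<Lambda> b"
proof -
  have "stl MD b = a0_w \<Lambda> b"
  proof (rule ext)
    fix w show "stl MD b w = a0_w \<Lambda> b w" by (cases w) (auto simp: stl_def)
  qed
  thus ?thesis by (simp add: opw_def a_zero_def)
qed

lemma opw_OG: "opw OG b = a_tilde_gamma \<gamma> b"
proof -
  have "stl OG b = atg_w \<gamma> b"
  proof (rule ext)
    fix w show "stl OG b w = atg_w \<gamma> b w"
    proof (cases w)
      case (Cons x r) thus ?thesis by (cases r) (auto simp: stl_def)
    qed (auto simp: stl_def)
  qed
  thus ?thesis by (simp add: opw_def a_tilde_gamma_def)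
qed

lemma opw_OF: "opw OF b = a_tilde_phi sc \<phi> b"
proof -
  have "stl OF b = atp_w sc \<phi> b"
  proof (rule ext)
    fix w show "stl OF b w = atp_w sc \<phi> b w"
    proof (cases w)
      case (Cons x r) thus ?thesis by (cases r) (auto simp: stl_def)
    qed (auto simp: stl_def)
  qed
  thus ?thesis by (simp add: opw_def a_tilde_phi_def)
qed

fun RW :: "(nat \<Rightarrow> 'b) \<Rightarrow> (nat \<Rightarrow> st4) \<Rightarrow> nat list \<Rightarrow> 'b list \<Rightarrow> (complex \<times> 'b list) option" where
  "RW u c [] w = Some (1, w)"
| "RW u c (p # ps) w = (case RW u c ps w of None \<Rightarrow> None | Some (a, w') \<Rightarrow>
      (case stp (c p) (u p) w' of None \<Rightarrow> None | Some (b, w'') \<Rightarrow> Some (a * b, w'')))"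

definition ops :: "(nat \<Rightarrow> 'b) \<Rightarrow> (nat \<Rightarrow> st4) \<Rightarrow> nat list \<Rightarrow> 'b fvec \<Rightarrow> 'b fvec" where
  "ops u c ps = opprod (map (\<lambda>i. opw (c i) (u i)) ps)"

lemma ops_Nil[simp]: "ops u c [] = id" by (simp add: ops_def)
lemma ops_Cons: "ops u c (p # ps) v = opw (c p) (u p) (ops u c ps v)" by (simp add: ops_def)

lemma ops_single: "ops u c ps [(a, w)] = (case RW u c ps w of None \<Rightarrow> [] | Some (b, w') \<Rightarrow> [(a * b, w')])"
proof (induction ps arbitrary: a w)
  case Nil thus ?case by simp
next
  case (Cons p ps)
  show ?case
  proof (cases "RW u c ps w")
    case None thus ?thesis using Cons by (simp add: ops_Cons opw_def)
  next
    case (Some aw) then obtain a' w' where aw: "RW u c ps w = Some (a', w')" by (cases aw) auto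
    show ?thesis using Cons aw
      by (auto simp: ops_Cons opw_def stl_def mult.assoc split: option.splits)
  qed
qed

definition mlin :: "('b list \<Rightarrow> complex) \<Rightarrow> bool" where
  "mlin g \<longleftrightarrow> (\<forall>xs ys x y. g (xs @ (x + y) # ys) = g (xs @ x # ys) + g (xs @ y # ys)) \<and>
               (\<forall>xs ys a x. g (xs @ sc a x # ys) = a * g (xs @ x # ys))"

lemma mlinD1: "mlin g \<Longrightarrow> g (xs @ (x + y) # ys) = g (xs @ x # ys) + g (xs @ y # ys)"
  by (simp add: mlin_def)
lemma mlinD2: "mlin g \<Longrightarrow> g (xs @ sc a x # ys) = a * g (xs @ x # ys)"
  by (simp add: mlin_def)
lemma mlinD1c: "mlin g \<Longrightarrow> g ((x + y) # ys) = g (x # ys) + g (y # ys)"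
  using mlinD1[of g "[]"] by simp
lemma mlinD2c: "mlin g \<Longrightarrow> g (sc a x # ys) = a * g (x # ys)"
  using mlinD2[of g "[]"] by simp
lemma mlinD1cc: "mlin g \<Longrightarrow> g (z # xs @ (x + y) # ys) = g (z # xs @ x # ys) + g (z # xs @ y # ys)"
  using mlinD1[of g "z # xs"] by simp
lemma mlinD2cc: "mlin g \<Longrightarrow> g (z # xs @ sc a x # ys) = a * g (z # xs @ x # ys)"
  using mlinD2[of g "z # xs"] by simp

lemma mlin_cf0: "mlin cf0"
  by (simp add: mlin_def cf0_def)

lemma mult_sc_left: "b * sc a x = sc a (b * x)" by (simp add: sc_mr)

lemma mlin_stl:
  assumes g: "mlin g"
  shows "mlin (\<lambda>w. Lg g (stl s b w))"
proof -
  have A: "Lg g (stl s' b w) = (case stp s' b w of None \<Rightarrow> 0 | Some (a, w') \<Rightarrow> a * g w')" for w s'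
    by (auto simp: stl_def split: option.splits)
  have add: "Lg g (stl s b (xs @ (x + y) # ys)) = Lg g (stl s b (xs @ x # ys)) + Lg g (stl s b (xs @ y # ys))"
    for xs ys x y
  proof (cases s)
    case CL thus ?thesis using mlinD1[OF g, of "b # xs"] by (simp add: A)
  next
    case MD thus ?thesis
      by (cases xs) (auto simp: A lam_add mlinD1c[OF g] mlinD1cc[OF g])
  next
    case OG show ?thesis
    proof (cases xs)
      case Nil thus ?thesis using OG
        by (cases ys) (auto simp: A distrib_left distrib_right gam_add mlinD1c[OF g])
    next
      case (Cons x0 xs') thus ?thesis using OG
        by (cases xs') (auto simp: A distrib_left distrib_right mlinD1c[OF g] mlinD1cc[OF g])
    qed
  next
    case OF show ?thesis
    proof (cases xs)
      case Nil thus ?thesis using OF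
        by (cases ys) (auto simp: A distrib_left distrib_right phi_add sc_ladd mlinD1c[OF g])
    next
      case (Cons x0 xs') thus ?thesis using OF
        by (cases xs') (auto simp: A sc_add mlinD1c[OF g] mlinD1cc[OF g])
    qed
  qed
  have scl: "Lg g (stl s b (xs @ sc a x # ys)) = a * Lg g (stl s b (xs @ x # ys))"
    for xs ys a x
  proof (cases s)
    case CL thus ?thesis using mlinD2[OF g, of "b # xs"] by (simp add: A)
  next
    case MD thus ?thesis
      by (cases xs) (auto simp: A lam_sc mlinD2c[OF g] mlinD2cc[OF g])
  next
    case OG show ?thesis
    proof (cases xs)
      case Nil thus ?thesis using OG
        by (cases ys) (auto simp: A mult_sc_left gam_sc sc_ml[symmetric] mlinD2c[OF g])
    next
      case (Cons x0 xs') thus ?thesis using OG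
        by (cases xs') (auto simp: A mult_sc_left mlinD2c[OF g] mlinD2cc[OF g])
    qed
  next
    case OF show ?thesis
    proof (cases xs)
      case Nil thus ?thesis using OF
        by (cases ys) (auto simp: A mult_sc_left phi_sc sc_sc[symmetric] mlinD2c[OF g])
    next
      case (Cons x0 xs') thus ?thesis using OF
        by (cases xs') (auto simp: A sc_sc mult.commute mlinD2c[OF g] mlinD2cc[OF g])
    qed
  qed
  show ?thesis unfolding mlin_def using add scl by blast
qed


lemma mlin_opw: "mlin g \<Longrightarrow> mlin (\<lambda>w. Lg g (stl s b w))"
  by (rule mlin_stl)

lemma Lg_opw: "Lg g (opw s b v) = Lg (\<lambda>w. Lg g (stl s b w)) v"
  by (simp add: opw_def Lg_lift)

lemma gpp_mult: "gpp sc \<phi> \<gamma> z * y = \<gamma> z * y + sc (\<phi> z) y"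
proof -
  have e: "sc (\<phi> z) 1 * y = sc (\<phi> z) y" using sc_ml[of "\<phi> z" 1 y] by simp
  show ?thesis by (simp add: gpp_def distrib_right e)
qed

lemma Lg_am: "mlin g \<Longrightarrow> Lg g (am_w sc \<phi> \<gamma> b w) = Lg g (stl OG b w) + Lg g (stl OF b w)"
proof (cases w)
  case (Cons x r)
  assume g: "mlin g"
  show ?thesis
  proof (cases r)
    case (Cons y r') thus ?thesis using \<open>w = x # r\<close> g
      by (simp add: stl_def gpp_mult mlinD1c)
  qed (simp add: stl_def Cons)
qed (simp add: stl_def)

lemma sum_UNIV_st4: "(\<Sum>s\<in>UNIV. f s) = f CL + f MD + f OG + (f OF :: 'c::comm_monoid_add)"
  by (simp add: UNIV_st4 add.assoc)

lemma Lg_Xop: "mlin g \<Longrightarrow> Lg g (Xop sc \<phi> \<gamma> \<Lambda> b v) = (\<Sum>s\<in>UNIV. Lg g (opw s b v))"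
proof -
  assume g: "mlin g"
  have "Lg g (a_minus sc \<phi> \<gamma> b v) = Lg (\<lambda>w. Lg g (am_w sc \<phi> \<gamma> b w)) v"
    by (simp add: a_minus_def Lg_lift)
  also have "\<dots> = Lg (\<lambda>w. Lg g (stl OG b w) + Lg g (stl OF b w)) v"
    using Lg_am[OF g] by simp
  also have "\<dots> = Lg g (opw OG b v) + Lg g (opw OF b v)"
    by (simp add: Lg_add_fun Lg_opw)
  finally have "Lg g (a_minus sc \<phi> \<gamma> b v) = Lg g (opw OG b v) + Lg g (opw OF b v)" .
  moreover have "Lg g (Xop sc \<phi> \<gamma> \<Lambda> b v) = Lg g (a_plus b v) + Lg g (a_minus sc \<phi> \<gamma> b v) + Lg g (a_zero \<Lambda> b v)"
    by (simp add: Xop_def)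
  ultimately show ?thesis
    unfolding sum_UNIV_st4 opw_CL opw_MD by (simp only: ac_simps)
qed

lemma ops_cong: "(\<And>i. i \<in> set ps \<Longrightarrow> c i = c' i) \<Longrightarrow> ops u c ps = ops u c' ps"
  unfolding ops_def by (simp cong: map_cong)

lemma expand:
  assumes "distinct ps" "mlin g"
  shows "Lg g (opprod (map (\<lambda>i. Xop sc \<phi> \<gamma> \<Lambda> (u i)) ps) v) =
         (\<Sum>c\<in>PiE (set ps) (\<lambda>_. UNIV). Lg g (ops u c ps v))"
  using assms
proof (induction ps arbitrary: g)
  case Nil thus ?case by simp
next
  case (Cons p ps)
  let ?P = "opprod (map (\<lambda>i. Xop sc \<phi> \<gamma> \<Lambda> (u i)) ps) v"
  have pn: "p \<notin> set ps" and d: "distinct ps" using Cons.prems by auto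
  have "Lg g (opprod (map (\<lambda>i. Xop sc \<phi> \<gamma> \<Lambda> (u i)) (p # ps)) v) = (\<Sum>s\<in>UNIV. Lg g (opw s (u p) ?P))"
    using Lg_Xop[OF Cons.prems(2)] by simp
  also have "\<dots> = (\<Sum>s\<in>UNIV. \<Sum>c\<in>PiE (set ps) (\<lambda>_. UNIV). Lg g (opw s (u p) (ops u c ps v)))"
  proof (rule sum.cong[OF refl])
    fix s
    have "Lg g (opw s (u p) ?P) = Lg (\<lambda>w. Lg g (stl s (u p) w)) ?P" by (simp add: Lg_opw)
    also have "\<dots> = (\<Sum>c\<in>PiE (set ps) (\<lambda>_. UNIV). Lg (\<lambda>w. Lg g (stl s (u p) w)) (ops u c ps v))"
      by (rule Cons.IH[OF d mlin_opw[OF Cons.prems(2)]])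
    finally show "Lg g (opw s (u p) ?P) = (\<Sum>c\<in>PiE (set ps) (\<lambda>_. UNIV). Lg g (opw s (u p) (ops u c ps v)))"
      by (simp add: Lg_opw)
  qed
  also have "\<dots> = (\<Sum>(s, c)\<in>UNIV \<times> PiE (set ps) (\<lambda>_. UNIV). Lg g (opw s (u p) (ops u c ps v)))"
    by (simp add: sum.cartesian_product)
  also have "\<dots> = (\<Sum>(s, c)\<in>UNIV \<times> PiE (set ps) (\<lambda>_. UNIV). Lg g (ops u (c(p := s)) (p # ps) v))"
  proof (rule sum.cong[OF refl], clarify)
    fix s and c :: "nat \<Rightarrow> st4"
    have "ops u (c(p := s)) ps = ops u c ps" using pn by (intro ops_cong) auto
    thus "Lg g (opw s (u p) (ops u c ps v)) = Lg g (ops u (c(p := s)) (p # ps) v)"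
      by (simp add: ops_Cons)
  qed
  also have "\<dots> = (\<Sum>c\<in>PiE (set (p # ps)) (\<lambda>_. UNIV). Lg g (ops u c (p # ps) v))"
  proof -
    have "PiE (set (p # ps)) (\<lambda>_. UNIV :: st4 set) = (\<lambda>(y, g). g(p := y)) ` (UNIV \<times> PiE (set ps) (\<lambda>_. UNIV))"
      by (simp add: PiE_insert_eq)
    moreover have "inj_on (\<lambda>(y, g). g(p := y)) (UNIV \<times> PiE (set ps) (\<lambda>_. UNIV :: st4 set))"
      using inj_combinator[OF pn, of "\<lambda>_. UNIV :: st4 set"] by simp
    ultimately show ?thesis
      by (simp add: sum.reindex case_prod_unfold)
  qed
  finally show ?case .
qed

definition val :: "(nat \<Rightarrow> 'b) \<Rightarrow> nat set \<Rightarrow> (nat \<Rightarrow> st4) \<Rightarrow> complex" where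
  "val u S c = (case RW u c (sorted_list_of_set S) [] of Some (a, []) \<Rightarrow> a | _ \<Rightarrow> 0)"

lemma Lg_cf0_ops: "Lg cf0 (ops u c ps [(1, w)]) = (case RW u c ps w of Some (a, []) \<Rightarrow> a | _ \<Rightarrow> 0)"
proof (cases "RW u c ps w")
  case (Some aw) thus ?thesis by (cases aw) (simp add: ops_single cf0_def split: list.split)
qed (simp add: ops_single)

lemma vstate_Lg: "vstate sc st \<phi> \<gamma> A = Lg cf0 (A vac)"
proof -
  have fw: "form_word sc st \<phi> \<gamma> w [] = cf0 w" for w
    by (cases w) (auto simp: cf0_def)
  have "form sc st \<phi> \<gamma> x vac = Lg cf0 x" for x
  proof (induction x)
    case (Cons p x) thus ?case by (cases p) (simp add: form_def vac_def fw)
  qed (simp add: form_def)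
  thus ?thesis by (simp add: vstate_def)
qed

definition Mx :: "(nat \<Rightarrow> 'b) \<Rightarrow> nat set \<Rightarrow> complex" where
  "Mx u S = vstate sc st \<phi> \<gamma> (opprod (map (\<lambda>i. Xop sc \<phi> \<gamma> \<Lambda> (u i)) (sorted_list_of_set S)))"

lemma Mx_expand: "finite S \<Longrightarrow> Mx u S = (\<Sum>c\<in>PiE S (\<lambda>_. UNIV). val u S c)"
  unfolding Mx_def vstate_Lg vac_def
  by (subst expand[OF _ mlin_cf0]) (simp_all add: Lg_cf0_ops val_def)

end

abbreviation sl :: "nat set \<Rightarrow> nat list" where "sl \<equiv> sorted_list_of_set"

lemma sl_append:
  assumes "finite A" "finite B" "\<forall>a\<in>A. \<forall>b\<in>B. a < b"
  shows "sl (A \<union> B) = sl A @ sl B"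
proof (rule sorted_distinct_set_unique)
  show "sorted (sl A @ sl B)" using assms by (auto simp: sorted_append less_imp_le)
  show "distinct (sl A @ sl B)" using assms by fastforce
qed (use assms in auto)

lemma sl_split3:
  assumes "finite S" "V \<subseteq> S" "V \<noteq> {}" "\<forall>x\<in>S. Min V \<le> x \<and> x \<le> Max V \<longrightarrow> x \<in> V"
  shows "sl S = sl {x\<in>S. x < Min V} @ sl V @ sl {x\<in>S. Max V < x}"
    and "sl (S - V) = sl {x\<in>S. x < Min V} @ sl {x\<in>S. Max V < x}"
proof -
  have fV: "finite V" using assms finite_subset by blast
  have mV: "\<forall>v\<in>V. Min V \<le> v \<and> v \<le> Max V" using fV assms by auto
  have c: "x < Min V \<or> x \<in> V \<or> Max V < x" if "x \<in> S" for x
    using assms(4) that by (meson not_le)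
  have e1: "S = {x\<in>S. x < Min V} \<union> (V \<union> {x\<in>S. Max V < x})"
    using assms(2) c by blast
  have e2: "S - V = {x\<in>S. x < Min V} \<union> {x\<in>S. Max V < x}"
    using c mV by fastforce
  have fA: "finite {x\<in>S. x < Min V}" and fB: "finite {x\<in>S. Max V < x}" using assms(1) by auto
  have lt1: "\<forall>a\<in>{x\<in>S. x < Min V}. \<forall>b\<in>V \<union> {x\<in>S. Max V < x}. a < b"
  proof (intro ballI)
    fix a b assume a: "a \<in> {x\<in>S. x < Min V}" and b: "b \<in> V \<union> {x\<in>S. Max V < x}"
    have "Min V \<le> Max V" using fV assms(3) by simp
    thus "a < b" using a b mV by force
  qed
  have lt2: "\<forall>a\<in>V. \<forall>b\<in>{x\<in>S. Max V < x}. a < b" using mV by force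
  have lt3: "\<forall>a\<in>{x\<in>S. x < Min V}. \<forall>b\<in>{x\<in>S. Max V < x}. a < b"
    using lt1 by blast
  have "sl S = sl {x\<in>S. x < Min V} @ sl (V \<union> {x\<in>S. Max V < x})"
    by (subst e1, rule sl_append[OF fA _ lt1]) (use fV fB in blast)
  also have "sl (V \<union> {x\<in>S. Max V < x}) = sl V @ sl {x\<in>S. Max V < x}"
    by (rule sl_append[OF fV fB lt2])
  finally show "sl S = sl {x\<in>S. x < Min V} @ sl V @ sl {x\<in>S. Max V < x}" .
  show "sl (S - V) = sl {x\<in>S. x < Min V} @ sl {x\<in>S. Max V < x}"
    by (subst e2, rule sl_append[OF fA fB lt3])
qed

context fock begin

lemma RW_append: "RW u c (xs @ ys) w = (case RW u c ys w of None \<Rightarrow> None | Some (a, w') \<Rightarrow>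
   (case RW u c xs w' of None \<Rightarrow> None | Some (b, w'') \<Rightarrow> Some (a * b, w'')))"
  by (induction xs) (auto split: option.splits simp: mult.assoc)

lemma RW_cong: "(\<And>i. i \<in> set ps \<Longrightarrow> c i = c' i) \<Longrightarrow> RW u c ps w = RW u c' ps w"
proof (induction ps)
  case (Cons p ps)
  have cp: "c p = c' p" using Cons.prems by simp
  have IH: "RW u c ps w = RW u c' ps w" using Cons by simp
  show ?case by (simp only: RW.simps IH cp)
qed simp

lemma RW_map: "RW u c (map f xs) w = RW (u \<circ> f) (c \<circ> f) xs w"
  by (induction xs) auto

lemma val_cong: "finite S \<Longrightarrow> (\<And>i. i \<in> S \<Longrightarrow> c i = c' i) \<Longrightarrow> val u S c = val u S c'"
  unfolding val_def by (subst RW_cong[of _ c c']) auto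

lemma stp_ext:
  assumes that: "stp s bb w1 = Some (b, v')"
  shows "stp s bb (w1 @ sc a x # rest) = Some (1, v' @ sc (a * b) x # rest)"
proof (cases s)
  case CL thus ?thesis using that by (auto simp: sc_one)
next
  case MD thus ?thesis using that by (cases w1) (auto simp: sc_one)
next
  case OG thus ?thesis using that
    by (cases w1 rule: remdups_adj.cases) (auto simp: sc_one)
next
  case OF thus ?thesis using that
    by (cases w1 rule: remdups_adj.cases) (auto simp: sc_one sc_sc mult.commute)
qed

lemma RW_ext: "RW u c ps v = Some (\<alpha>, v') \<Longrightarrow> RW u c ps (v @ x # rest) = Some (1, v' @ sc \<alpha> x # rest)"
proof (induction ps arbitrary: \<alpha> v')
  case Nil thus ?case by (simp add: sc_one)
next
  case (Cons p ps)
  obtain a w1 where r: "RW u c ps v = Some (a, w1)" using Cons.prems by (auto split: option.splits)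
  obtain b where s: "stp (c p) (u p) w1 = Some (b, v')" and al: "\<alpha> = a * b"
    using Cons.prems r by (auto split: option.splits)
  show ?case using Cons.IH[OF r] stp_ext[OF s, of a x rest] al by simp
qed

lemma mlin_ops: "mlin g \<Longrightarrow> mlin (\<lambda>w. Lg g (ops u c xs [(1, w)]))"
proof (induction xs arbitrary: g)
  case Nil thus ?case by (simp add: mlin_def)
next
  case (Cons p xs)
  have "mlin (\<lambda>w. Lg (\<lambda>w. Lg g (stl (c p) (u p) w)) (ops u c xs [(1, w)]))"
    by (rule Cons.IH[OF mlin_opw[OF Cons.prems]])
  thus ?case by (simp add: ops_Cons Lg_opw)
qed

definition fin :: "(nat \<Rightarrow> 'b) \<Rightarrow> (nat \<Rightarrow> st4) \<Rightarrow> nat list \<Rightarrow> 'b list \<Rightarrow> complex" where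
  "fin u c xs w = (case RW u c xs w of Some (a, []) \<Rightarrow> a | _ \<Rightarrow> 0)"

lemma fin_sc: "fin u c xs (sc a x # rest) = a * fin u c xs (x # rest)"
proof -
  have "fin u c xs w = Lg cf0 (ops u c xs [(1, w)])" for w
    by (simp add: fin_def Lg_cf0_ops)
  thus ?thesis using mlinD2c[OF mlin_ops[OF mlin_cf0]] by simp
qed

lemma segment:
  assumes S: "finite S" "V \<subseteq> S" "V \<noteq> {}" "\<forall>x\<in>S. Min V \<le> x \<and> x \<le> Max V \<longrightarrow> x \<in> V"
    and r: "RW u c (sl V) [] = Some (\<alpha>, [])"
  shows "val u S c = \<alpha> * val u (S - V) c"
proof -
  let ?A = "sl {x\<in>S. x < Min V}" and ?B = "sl {x\<in>S. Max V < x}"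
  have vS: "val u S c = fin u c (?A @ sl V @ ?B) []" and vS': "val u (S - V) c = fin u c (?A @ ?B) []"
    using sl_split3[OF S] by (simp_all add: val_def fin_def)
  show ?thesis
  proof (cases "RW u c ?B []")
    case None thus ?thesis using vS vS' by (simp add: fin_def RW_append)
  next
    case (Some bw)
    then obtain \<beta> w where b: "RW u c ?B [] = Some (\<beta>, w)" by (cases bw) auto
    show ?thesis
    proof (cases w)
      case Nil thus ?thesis using vS vS' b r
        by (auto simp: fin_def RW_append split: option.splits list.splits)
    next
      case (Cons x rest)
      have r2: "RW u c (sl V) (x # rest) = Some (1, sc \<alpha> x # rest)"
        using RW_ext[OF r, of x rest] by simp
      have "val u S c = \<beta> * fin u c ?A (sc \<alpha> x # rest)"
        using vS b r2 Cons by (auto simp: fin_def RW_append split: option.splits list.splits)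
      moreover have "val u (S - V) c = \<beta> * fin u c ?A (x # rest)"
        using vS' b Cons by (auto simp: fin_def RW_append split: option.splits list.splits)
      ultimately show ?thesis by (simp add: fin_sc)
    qed
  qed
qed

end

fun reqR :: "st4 \<Rightarrow> int" where
  "reqR CL = 0" | "reqR MD = 1" | "reqR OG = 2" | "reqR OF = 1"
fun dlt :: "st4 \<Rightarrow> int" where
  "dlt CL = 1" | "dlt MD = 0" | "dlt OG = -1" | "dlt OF = -1"

definition htS :: "(nat \<Rightarrow> st4) \<Rightarrow> nat set \<Rightarrow> int" where
  "htS c T = (\<Sum>x\<in>T. dlt (c x))"

context fock begin

lemma stp_ok: "stp s b w \<noteq> None \<longleftrightarrow> reqR s \<le> int (length w)"
  by (cases s; cases w rule: remdups_adj.cases) auto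

lemma stp_len: "stp s b w = Some (a, w') \<Longrightarrow> int (length w') = int (length w) + dlt s"
  by (cases s; cases w rule: remdups_adj.cases) auto

lemma RWL_len: "distinct ps \<Longrightarrow> RW u c ps w = Some (a, w') \<Longrightarrow> int (length w') = int (length w) + htS c (set ps)"
proof (induction ps arbitrary: a w')
  case Nil thus ?case by (simp add: htS_def)
next
  case (Cons p ps)
  obtain a1 w1 where r: "RW u c ps w = Some (a1, w1)" using Cons.prems by (auto split: option.splits)
  obtain b where s: "stp (c p) (u p) w1 = Some (b, w')" using Cons.prems r by (auto split: option.splits)
  show ?case using Cons.IH[OF _ r] stp_len[OF s] Cons.prems(1) by (simp add: htS_def)
qed

lemma RWL_ok: "sorted_wrt (<) ps \<Longrightarrow> RW u c ps w \<noteq> None \<longleftrightarrow>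
   (\<forall>p\<in>set ps. reqR (c p) \<le> int (length w) + htS c {x\<in>set ps. p < x})"
proof (induction ps)
  case Nil thus ?case by simp
next
  case (Cons p ps)
  have lt: "\<forall>x\<in>set ps. p < x" and so: "sorted_wrt (<) ps" using Cons.prems by auto
  have d: "distinct ps" using so strict_sorted_iff by blast
  have e1: "{x\<in>set (p # ps). p < x} = set ps" using lt by auto
  have e2: "{x\<in>set (p # ps). q < x} = {x\<in>set ps. q < x}" if "q \<in> set ps" for q
    using lt that by auto
  show ?case
  proof (cases "RW u c ps w")
    case None thus ?thesis using Cons.IH[OF so] e2 by auto
  next
    case (Some aw)
    then obtain a1 w1 where r: "RW u c ps w = Some (a1, w1)" by (cases aw) auto
    have "RW u c (p # ps) w \<noteq> None \<longleftrightarrow> stp (c p) (u p) w1 \<noteq> None" using r by (auto split: option.splits)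
    also have "\<dots> \<longleftrightarrow> reqR (c p) \<le> int (length w) + htS c (set ps)"
      using stp_ok RWL_len[OF d r] by simp
    finally show ?thesis using Cons.IH[OF so] r e1 e2 by auto
  qed
qed

lemma RWS_ok: "finite S \<Longrightarrow> RW u c (sl S) w \<noteq> None \<longleftrightarrow>
   (\<forall>p\<in>S. reqR (c p) \<le> int (length w) + htS c {x\<in>S. p < x})"
  using RWL_ok[of "sl S" u c w] by (simp add: strict_sorted_list_of_set)

lemma RWS_len: "finite S \<Longrightarrow> RW u c (sl S) w = Some (a, w') \<Longrightarrow> int (length w') = int (length w) + htS c S"
  using RWL_len[of "sl S" u c w a w'] by simp

end

definition NCs :: "nat set \<Rightarrow> nat set set set" where
  "NCs S = {\<pi>. partition_on S \<pi> \<and> noncrossing \<pi>}"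
definition NCns :: "nat set \<Rightarrow> nat set set set" where
  "NCns S = {\<pi> \<in> NCs S. \<forall>B\<in>\<pi>. card B \<noteq> 1}"
definition NCt :: "nat set \<Rightarrow> nat set set set" where
  "NCt V = {\<rho> \<in> NCns V. \<exists>B\<in>\<rho>. Min V \<in> B \<and> Max V \<in> B}"
definition isint :: "nat set \<Rightarrow> nat set \<Rightarrow> bool" where
  "isint S V \<longleftrightarrow> (\<forall>x\<in>S. Min V \<le> x \<and> x \<le> Max V \<longrightarrow> x \<in> V)"

lemma part_blk: "partition_on S \<pi> \<Longrightarrow> x \<in> S \<Longrightarrow> \<exists>B\<in>\<pi>. x \<in> B"
  by (auto simp: partition_on_def)
lemma part_uniq: "partition_on S \<pi> \<Longrightarrow> B \<in> \<pi> \<Longrightarrow> B' \<in> \<pi> \<Longrightarrow> x \<in> B \<Longrightarrow> x \<in> B' \<Longrightarrow> B = B'"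
  by (auto simp: partition_on_def disjoint_def)
lemma part_sub: "partition_on S \<pi> \<Longrightarrow> B \<in> \<pi> \<Longrightarrow> B \<subseteq> S"
  by (auto simp: partition_on_def)
lemma part_ne: "partition_on S \<pi> \<Longrightarrow> B \<in> \<pi> \<Longrightarrow> B \<noteq> {}"
  by (auto simp: partition_on_def)
lemma part_fin: "finite S \<Longrightarrow> partition_on S \<pi> \<Longrightarrow> B \<in> \<pi> \<Longrightarrow> finite B"
  by (rule finite_subset[OF part_sub])
lemma part_finite: "finite S \<Longrightarrow> partition_on S \<pi> \<Longrightarrow> finite \<pi>"
  by (metis finite_UnionD partition_on_def)

lemma closing_iff:
  assumes "partition_on S \<pi>" "B \<in> \<pi>" "x \<in> B" shows "is_closing \<pi> x \<longleftrightarrow> x = Max B"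
proof
  assume "is_closing \<pi> x"
  then obtain V where "V \<in> \<pi>" "x \<in> V" "x = Max V" unfolding is_closing_def by auto
  moreover have "V = B" using part_uniq[OF assms(1) \<open>V \<in> \<pi>\<close> assms(2) \<open>x \<in> V\<close> assms(3)] .
  ultimately show "x = Max B" by simp
qed (use assms in \<open>auto simp: is_closing_def\<close>)
lemma opening_iff:
  assumes "partition_on S \<pi>" "B \<in> \<pi>" "x \<in> B" shows "is_opening \<pi> x \<longleftrightarrow> x = Min B"
proof
  assume "is_opening \<pi> x"
  then obtain V where "V \<in> \<pi>" "x \<in> V" "x = Min V" unfolding is_opening_def by auto
  moreover have "V = B" using part_uniq[OF assms(1) \<open>V \<in> \<pi>\<close> assms(2) \<open>x \<in> V\<close> assms(3)] .
  ultimately show "x = Min B" by simp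
qed (use assms in \<open>auto simp: is_opening_def\<close>)

lemma ncD: "noncrossing \<pi> \<Longrightarrow> V \<in> \<pi> \<Longrightarrow> W \<in> \<pi> \<Longrightarrow> V \<noteq> W \<Longrightarrow> a < b \<Longrightarrow> b < c \<Longrightarrow> c < d \<Longrightarrow>
   a \<in> V \<Longrightarrow> c \<in> V \<Longrightarrow> b \<in> W \<Longrightarrow> d \<in> W \<Longrightarrow> False"
  unfolding noncrossing_def by metis

lemma nc_subset: "noncrossing \<pi> \<Longrightarrow> \<pi>' \<subseteq> \<pi> \<Longrightarrow> noncrossing \<pi>'"
  unfolding noncrossing_def by (meson subsetD)

lemma interval_block:
  assumes "finite S" "S \<noteq> {}" "\<pi> \<in> NCs S"
  shows "\<exists>V\<in>\<pi>. isint S V"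
proof -
  have p: "partition_on S \<pi>" and nc: "noncrossing \<pi>" using assms(3) by (auto simp: NCs_def)
  have fp: "finite \<pi>" using part_finite[OF assms(1) p] .
  have ne: "\<pi> \<noteq> {}" using p assms(2) by (auto simp: partition_on_def)
  let ?M = "Max ` \<pi>"
  have "Min ?M \<in> ?M" using fp ne by simp
  then obtain V where V: "V \<in> \<pi>" "Max V = Min ?M" by auto
  have fV: "finite V" "V \<noteq> {}" using part_fin[OF assms(1) p V(1)] part_ne[OF p V(1)] by auto
  have "isint S V" unfolding isint_def
  proof (intro ballI impI)
    fix x assume x: "x \<in> S" "Min V \<le> x \<and> x \<le> Max V"
    obtain B where B: "B \<in> \<pi>" "x \<in> B" using part_blk[OF p x(1)] by blast
    show "x \<in> V"
    proof (rule ccontr)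
      assume xV: "x \<notin> V"
      hence BV: "B \<noteq> V" using B by auto
      have fB: "finite B" "B \<noteq> {}" using part_fin[OF assms(1) p B(1)] part_ne[OF p B(1)] by auto
      have "Min V \<in> V" "Max V \<in> V" using fV by auto
      hence lt1: "Min V < x" "x < Max V" using x xV by (auto simp: le_less)
      have "Max B \<in> B" using fB by simp
      have "Max V \<le> Max B" using V(2) B(1) fp by simp
      moreover have "Max B \<noteq> Max V" using part_uniq[OF p B(1) V(1)] \<open>Max B \<in> B\<close> \<open>Max V \<in> V\<close> BV by metis
      ultimately have "Max V < Max B" by simp
      moreover have "x \<le> Max B" using fB B by simp
      show False using ncD[OF nc V(1) B(1) BV[symmetric] lt1(1) lt1(2) \<open>Max V < Max B\<close>]
        \<open>Min V \<in> V\<close> \<open>Max V \<in> V\<close> B(2) \<open>Max B \<in> B\<close> by blast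
    qed
  qed
  thus ?thesis using V by blast
qed

lemma remove_block:
  assumes "\<pi> \<in> NCs S" "V \<in> \<pi>"
  shows "\<pi> - {V} \<in> NCs (S - V)"
proof -
  have p: "partition_on S \<pi>" and nc: "noncrossing \<pi>" using assms by (auto simp: NCs_def)
  have "partition_on (S - V) (\<pi> - {V})"
    unfolding partition_on_def
  proof (intro conjI)
    show "\<Union> (\<pi> - {V}) = S - V"
    proof
      show "\<Union> (\<pi> - {V}) \<subseteq> S - V"
        using p part_uniq[OF p] assms(2) by (auto simp: partition_on_def)
      show "S - V \<subseteq> \<Union> (\<pi> - {V})" using p by (auto simp: partition_on_def)
    qed
    show "disjoint (\<pi> - {V})" using p by (auto simp: partition_on_def disjoint_def)
    show "{} \<notin> \<pi> - {V}" using p by (auto simp: partition_on_def)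
  qed
  moreover have "noncrossing (\<pi> - {V})" using nc_subset[OF nc] by blast
  ultimately show ?thesis by (simp add: NCs_def)
qed

lemma insert_block:
  assumes "\<pi> \<in> NCs S'" "V \<noteq> {}" "finite V" "V \<inter> S' = {}" "isint (S' \<union> V) V"
  shows "insert V \<pi> \<in> NCs (S' \<union> V)"
proof -
  have p: "partition_on S' \<pi>" and nc: "noncrossing \<pi>" using assms by (auto simp: NCs_def)
  have VW: "V \<inter> W = {}" if "W \<in> \<pi>" for W using part_sub[OF p that] assms(4) by blast
  have "partition_on (S' \<union> V) (insert V \<pi>)"
    unfolding partition_on_def
  proof (intro conjI)
    show "\<Union> (insert V \<pi>) = S' \<union> V" using p by (auto simp: partition_on_def)
    show "disjoint (insert V \<pi>)" using p VW
      by (auto simp: partition_on_def disjoint_def)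
    show "{} \<notin> insert V \<pi>" using p assms(2) by (auto simp: partition_on_def)
  qed
  moreover have "noncrossing (insert V \<pi>)"
    unfolding noncrossing_def
  proof (intro ballI impI notI)
    fix A B assume A: "A \<in> insert V \<pi>" and B: "B \<in> insert V \<pi>" and AB: "A \<noteq> B"
    assume "\<exists>a b c d. a < b \<and> b < c \<and> c < d \<and> a \<in> A \<and> c \<in> A \<and> b \<in> B \<and> d \<in> B"
    then obtain a b c d where o: "a < b" "b < c" "c < d" "a \<in> A" "c \<in> A" "b \<in> B" "d \<in> B" by blast
    have mm: "Min V \<le> x \<and> x \<le> Max V" if "x \<in> V" for x using assms(3) that by simp
    have sub: "A \<subseteq> S' \<union> V" "B \<subseteq> S' \<union> V" using A B part_sub[OF p] by auto
    show False
    proof (cases "A = V")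
      case True
      hence "B \<in> \<pi>" using B AB by auto
      have "b \<in> V" using assms(5) sub o mm True unfolding isint_def
        by (meson dual_order.trans less_imp_le subsetD)
      thus False using VW[OF \<open>B \<in> \<pi>\<close>] o by auto
    next
      case False
      hence "A \<in> \<pi>" using A by auto
      show False
      proof (cases "B = V")
        case True
        have "c \<in> V" using assms(5) sub o mm True unfolding isint_def
          by (meson dual_order.trans less_imp_le subsetD)
        thus False using VW[OF \<open>A \<in> \<pi>\<close>] o by auto
      next
        case False
        hence "B \<in> \<pi>" using B by auto
        show False using ncD[OF nc \<open>A \<in> \<pi>\<close> \<open>B \<in> \<pi>\<close> AB o] .
      qed
    qed
  qed
  ultimately show ?thesis by (simp add: NCs_def)
qed


definition matches :: "nat set set \<Rightarrow> (nat \<Rightarrow> st4) \<Rightarrow> nat set \<Rightarrow> bool" where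
  "matches \<pi> c S \<longleftrightarrow> (\<forall>i\<in>S. (c i = CL \<longleftrightarrow> is_closing \<pi> i) \<and>
                                (c i = MD \<longleftrightarrow> \<not> is_closing \<pi> i \<and> \<not> is_opening \<pi> i))"

fun req3 :: "st4 \<Rightarrow> int" where "req3 CL = 0" | "req3 _ = 1"

definition isOP :: "st4 \<Rightarrow> bool" where "isOP s \<longleftrightarrow> s = OG \<or> s = OF"

definition valid :: "(nat \<Rightarrow> st4) \<Rightarrow> nat set \<Rightarrow> bool" where
  "valid c S \<longleftrightarrow> (\<forall>p\<in>S. req3 (c p) \<le> htS c {x\<in>S. p < x}) \<and> htS c S = 0"

lemma isOP_iff: "isOP s \<longleftrightarrow> s \<noteq> CL \<and> s \<noteq> MD"
  by (cases s) (auto simp: isOP_def)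

lemma dlt_MD: "s = MD \<Longrightarrow> dlt s = 0" by simp

lemma htS_union: "finite A \<Longrightarrow> finite B \<Longrightarrow> A \<inter> B = {} \<Longrightarrow> htS c (A \<union> B) = htS c A + htS c B"
  by (simp add: htS_def sum.union_disjoint)

lemma htS_MD: "(\<And>x. x \<in> A \<Longrightarrow> c x = MD) \<Longrightarrow> htS c A = 0"
  by (simp add: htS_def)

lemma htS_insert: "finite A \<Longrightarrow> x \<notin> A \<Longrightarrow> htS c (insert x A) = dlt (c x) + htS c A"
  by (simp add: htS_def)

lemma card_Diff_lt: "finite S \<Longrightarrow> x \<in> V \<Longrightarrow> x \<in> S \<Longrightarrow> card (S - V) < card S"
  by (rule psubset_card_mono) auto

lemma same_block_status:
  assumes "partition_on S \<pi>" "partition_on S' \<pi>'" "B \<in> \<pi>" "B \<in> \<pi>'" "x \<in> B"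
  shows "(is_closing \<pi> x \<longleftrightarrow> is_closing \<pi>' x) \<and> (is_opening \<pi> x \<longleftrightarrow> is_opening \<pi>' x)"
  using closing_iff[OF assms(1,3,5)] closing_iff[OF assms(2,4,5)]
        opening_iff[OF assms(1,3,5)] opening_iff[OF assms(2,4,5)] by simp

lemma card_ne1_MinMax: "finite B \<Longrightarrow> B \<noteq> {} \<Longrightarrow> card B \<noteq> 1 \<Longrightarrow> Min B < Max B"
proof -
  assume f: "finite B" and ne: "B \<noteq> {}" and c: "card B \<noteq> 1"
  have "Min B \<le> Max B" using f ne by simp
  moreover have "Min B \<noteq> Max B"
  proof
    assume e: "Min B = Max B"
    have "B = {Min B}"
    proof
      show "B \<subseteq> {Min B}"
      proof
        fix x assume "x \<in> B"
        hence "Min B \<le> x" "x \<le> Max B" using f by auto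
        thus "x \<in> {Min B}" using e by auto
      qed
    qed (use f ne in simp)
    hence "card B = card {Min B}" by (rule arg_cong)
    thus False using c by simp
  qed
  ultimately show ?thesis by simp
qed

lemma P2_surj: "finite S \<Longrightarrow> valid c S \<Longrightarrow> \<exists>\<pi>\<in>NCns S. matches \<pi> c S"
proof (induction "card S" arbitrary: S rule: less_induct)
  case less
  show ?case
  proof (cases "S = {}")
    case True
    have "{} \<in> NCns S" using True by (simp add: NCns_def NCs_def partition_on_empty noncrossing_def)
    thus ?thesis using True by (auto simp: matches_def)
  next
    case False
    note fS = less.prems(1)
    have vS: "\<And>p. p \<in> S \<Longrightarrow> req3 (c p) \<le> htS c {x\<in>S. p < x}" and h0: "htS c S = 0"
      using less.prems(2) by (auto simp: valid_def)
    let ?CL = "{x\<in>S. c x = CL}"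
    have "Max S \<in> S" using fS False by simp
    have "\<forall>x\<in>S. x \<le> Max S" using fS by simp
    hence "{x\<in>S. Max S < x} = {}" by force
    hence "htS c {x\<in>S. Max S < x} = 0" unfolding htS_def by (simp only: sum.empty)
    hence "c (Max S) = CL" using vS[OF \<open>Max S \<in> S\<close>] by (cases "c (Max S)") auto
    hence CLne: "?CL \<noteq> {}" using \<open>Max S \<in> S\<close> by auto
    define j where "j = Min ?CL"
    have fCL: "finite ?CL" using fS by simp
    have jS: "j \<in> S" and cj: "c j = CL" using Min_in[OF fCL CLne] by (auto simp: j_def)
    have jmin: "\<And>x. x \<in> S \<Longrightarrow> c x = CL \<Longrightarrow> j \<le> x" using fCL by (auto simp: j_def)
    let ?OP = "{x\<in>S. x < j \<and> isOP (c x)}"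
    have OPne: "?OP \<noteq> {}"
    proof
      assume e: "?OP = {}"
      have md: "c x = MD" if "x \<in> {x\<in>S. x < j}" for x
        using that e jmin[of x] isOP_iff[of "c x"] by force
      have e1: "S = {x\<in>S. x < j} \<union> insert j {x\<in>S. j < x}" using jS by auto
      have "htS c S = htS c {x\<in>S. x < j} + htS c (insert j {x\<in>S. j < x})"
        by (subst e1, rule htS_union) (use fS in auto)
      also have "\<dots> = 1 + htS c {x\<in>S. j < x}"
      proof -
        have "htS c {x\<in>S. x < j} = 0" by (rule htS_MD) (rule md)
        thus ?thesis using htS_insert[of "{x\<in>S. j < x}" j c] fS cj by simp
      qed
      finally show False using h0 vS[OF jS] cj by simp
    qed
    define i where "i = Max ?OP"
    have fOP: "finite ?OP" using fS by simp
    have iS: "i \<in> S" and ij: "i < j" and ci: "isOP (c i)" using Max_in[OF fOP OPne] by (auto simp: i_def)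
    have imax: "\<And>x. x \<in> S \<Longrightarrow> x < j \<Longrightarrow> isOP (c x) \<Longrightarrow> x \<le> i" using fOP by (auto simp: i_def)
    define V where "V = {x\<in>S. i \<le> x \<and> x \<le> j}"
    have VS: "V \<subseteq> S" and fV: "finite V" and iV: "i \<in> V" and jV: "j \<in> V"
      using fS iS jS ij by (auto simp: V_def)
    have minV: "Min V = i" using fV iV by (intro Min_eqI) (auto simp: V_def)
    have maxV: "Max V = j" using fV jV by (intro Max_eqI) (auto simp: V_def)
    have midMD: "c x = MD" if "x \<in> V" "x \<noteq> i" "x \<noteq> j" for x
    proof -
      have "i < x" "x < j" "x \<in> S" using that by (auto simp: V_def)
      hence "c x \<noteq> CL" using jmin[of x] by auto
      moreover have "\<not> isOP (c x)" using imax[of x] \<open>i < x\<close> \<open>x < j\<close> \<open>x \<in> S\<close> by auto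
      ultimately show ?thesis using isOP_iff by blast
    qed
    have hV: "htS c V = 0"
    proof -
      have e: "V = insert i (insert j (V - {i, j}))" using iV jV by auto
      have "htS c V = dlt (c i) + (dlt (c j) + htS c (V - {i, j}))"
        using fV ij by (subst e) (simp add: htS_insert)
      also have "htS c (V - {i, j}) = 0" using midMD by (intro htS_MD) auto
      finally show ?thesis using ci cj by (auto simp: isOP_def)
    qed
    define S' where "S' = S - V"
    have fS': "finite S'" using fS by (simp add: S'_def)
    have cardlt: "card S' < card S" unfolding S'_def using card_Diff_lt[OF fS iV] VS iV by blast
    have S'out: "p < i \<or> j < p" if "p \<in> S'" for p using that by (auto simp: S'_def V_def)
    have "valid c S'" unfolding valid_def
    proof (intro conjI ballI)
      fix p assume p: "p \<in> S'"
      hence pS: "p \<in> S" by (simp add: S'_def)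
      show "req3 (c p) \<le> htS c {x\<in>S'. p < x}"
      proof (cases "j < p")
        case True
        have "{x\<in>S'. p < x} = {x\<in>S. p < x}" using True by (auto simp: S'_def V_def)
        thus ?thesis using vS[OF pS] by simp
      next
        case False
        hence pi: "p < i" using S'out[OF p] by simp
        have "{x\<in>S. p < x} = {x\<in>S'. p < x} \<union> V" using pi VS by (auto simp: S'_def V_def)
        hence "htS c {x\<in>S. p < x} = htS c {x\<in>S'. p < x} + htS c V"
          using fS' fV by (simp only:) (rule htS_union, auto simp: S'_def)
        thus ?thesis using vS[OF pS] hV by simp
      qed
    next
      have "S = S' \<union> V" using VS by (auto simp: S'_def)
      hence "htS c S = htS c S' + htS c V" using fS' fV by (simp only:) (rule htS_union, auto simp: S'_def)
      thus "htS c S' = 0" using h0 hV by simp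
    qed
    then obtain \<pi>' where \<pi>': "\<pi>' \<in> NCns S'" "matches \<pi>' c S'"
      using less.hyps[OF cardlt fS'] by blast
    have SS: "S' \<union> V = S" using VS by (auto simp: S'_def)
    have isV: "isint (S' \<union> V) V" unfolding isint_def SS minV maxV by (auto simp: V_def)
    have nc: "insert V \<pi>' \<in> NCs S"
      using insert_block[of \<pi>' S' V] \<pi>'(1) iV fV isV SS by (auto simp: NCns_def S'_def)
    have cV: "card V \<noteq> 1"
    proof
      assume "card V = 1"
      then obtain z where "V = {z}" by (auto simp: card_1_singleton_iff)
      thus False using iV jV ij by auto
    qed
    have ns: "insert V \<pi>' \<in> NCns S" using nc cV \<pi>'(1) by (auto simp: NCns_def)
    have p: "partition_on S (insert V \<pi>')" using nc by (simp add: NCs_def)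
    have p': "partition_on S' \<pi>'" using \<pi>'(1) by (simp add: NCns_def NCs_def)
    have "matches (insert V \<pi>') c S" unfolding matches_def
    proof (intro ballI)
      fix x assume xS: "x \<in> S"
      show "(c x = CL \<longleftrightarrow> is_closing (insert V \<pi>') x) \<and>
            (c x = MD \<longleftrightarrow> \<not> is_closing (insert V \<pi>') x \<and> \<not> is_opening (insert V \<pi>') x)"
      proof (cases "x \<in> V")
        case True
        have cl: "is_closing (insert V \<pi>') x \<longleftrightarrow> x = j" using closing_iff[OF p _ True] maxV by simp
        have op: "is_opening (insert V \<pi>') x \<longleftrightarrow> x = i" using opening_iff[OF p _ True] minV by simp
        show ?thesis
        proof (cases "x = j")
          case True thus ?thesis using cl op cj ij by simp
        next
          case False
          show ?thesis
          proof (cases "x = i")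
            case True thus ?thesis using cl op ci ij by (auto simp: isOP_def)
          next
            case False thus ?thesis using cl op midMD[OF \<open>x \<in> V\<close>] \<open>x \<noteq> j\<close> by simp
          qed
        qed
      next
        case False
        hence xS': "x \<in> S'" using xS by (simp add: S'_def)
        obtain B where B: "B \<in> \<pi>'" "x \<in> B" using part_blk[OF p' xS'] by blast
        have "(is_closing (insert V \<pi>') x \<longleftrightarrow> is_closing \<pi>' x) \<and> (is_opening (insert V \<pi>') x \<longleftrightarrow> is_opening \<pi>' x)"
          using same_block_status[OF p p' _ B(1) B(2)] B(1) by simp
        thus ?thesis using \<pi>'(2) xS' by (simp add: matches_def)
      qed
    qed
    thus ?thesis using ns by blast
  qed
qed


definition fbj :: "(nat \<Rightarrow> st4) \<Rightarrow> nat set \<Rightarrow> nat" where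
  "fbj c S = Min {y\<in>S. c y = CL}"
definition fbi :: "(nat \<Rightarrow> st4) \<Rightarrow> nat set \<Rightarrow> nat" where
  "fbi c S = Max {y\<in>S. y < fbj c S \<and> isOP (c y)}"

lemma first_block:
  assumes fS: "finite S" and ne: "S \<noteq> {}" and ns: "\<pi> \<in> NCns S" and m: "matches \<pi> c S"
  shows "{x\<in>S. fbi c S \<le> x \<and> x \<le> fbj c S} \<in> \<pi>"
proof -
  have p: "partition_on S \<pi>" and nc: "noncrossing \<pi>" and sg: "\<forall>B\<in>\<pi>. card B \<noteq> 1"
    using ns by (auto simp: NCns_def NCs_def)
  have mc: "\<And>x. x \<in> S \<Longrightarrow> c x = CL \<longleftrightarrow> is_closing \<pi> x"
    and mm: "\<And>x. x \<in> S \<Longrightarrow> c x = MD \<longleftrightarrow> \<not> is_closing \<pi> x \<and> \<not> is_opening \<pi> x"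
    using m by (auto simp: matches_def)
  obtain x0 where "x0 \<in> S" using ne by blast
  then obtain B0 where B0: "B0 \<in> \<pi>" "x0 \<in> B0" using part_blk[OF p] by blast
  have "finite B0" "B0 \<noteq> {}" using part_fin[OF fS p B0(1)] B0 by auto
  hence "Max B0 \<in> B0" by simp
  hence "Max B0 \<in> S" "is_closing \<pi> (Max B0)" using part_sub[OF p B0(1)] closing_iff[OF p B0(1)] by auto
  hence "c (Max B0) = CL" using mc by blast
  let ?CL = "{y\<in>S. c y = CL}"
  have CLne: "?CL \<noteq> {}" using \<open>Max B0 \<in> S\<close> \<open>c (Max B0) = CL\<close> by blast
  have fCL: "finite ?CL" using fS by simp
  define j where "j = fbj c S"
  have jS: "j \<in> S" and cj: "c j = CL" using Min_in[OF fCL CLne] by (auto simp: j_def fbj_def)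
  have jmin: "\<And>x. x \<in> S \<Longrightarrow> c x = CL \<Longrightarrow> j \<le> x" using fCL by (auto simp: j_def fbj_def)
  have "is_closing \<pi> j" using mc[OF jS] cj by simp
  then obtain W where W: "W \<in> \<pi>" "j \<in> W" "j = Max W" by (auto simp: is_closing_def)
  have fW: "finite W" "W \<noteq> {}" using part_fin[OF fS p W(1)] W by auto
  have WS: "W \<subseteq> S" using part_sub[OF p W(1)] .
  have mlt: "Min W < Max W" using card_ne1_MinMax[OF fW] sg W(1) by blast
  have minW: "Min W \<in> W" using fW by simp
  have A: "x \<in> W" if x: "x \<in> S" "Min W \<le> x" "x \<le> j" for x
  proof (rule ccontr)
    assume xW: "x \<notin> W"
    obtain B where B: "B \<in> \<pi>" "x \<in> B" using part_blk[OF p x(1)] by blast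
    have BW: "B \<noteq> W" using B xW by auto
    have lt1: "Min W < x" "x < j" using x xW minW W(2) by (auto simp: le_less)
    have fB: "finite B" "B \<noteq> {}" using part_fin[OF fS p B(1)] B by auto
    have mB: "Max B \<in> B" using fB by simp
    have mBS: "Max B \<in> S" using part_sub[OF p B(1)] mB by blast
    have "is_closing \<pi> (Max B)" using closing_iff[OF p B(1) mB] by simp
    hence "j \<le> Max B" using jmin[OF mBS] mc[OF mBS] by simp
    moreover have "Max B \<noteq> j" using part_uniq[OF p B(1) W(1)] mB W(2) BW by metis
    ultimately have "j < Max B" by simp
    show False using ncD[OF nc W(1) B(1) BW[symmetric] lt1(1) lt1(2) \<open>j < Max B\<close> minW W(2) B(2) mB] .
  qed
  have minS: "Min W \<in> S" using WS minW by blast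
  have opW: "isOP (c (Min W))"
  proof -
    have "is_opening \<pi> (Min W)" using opening_iff[OF p W(1) minW] by simp
    moreover have "\<not> is_closing \<pi> (Min W)" using closing_iff[OF p W(1) minW] mlt by simp
    ultimately show ?thesis using mc[OF minS] mm[OF minS] isOP_iff by blast
  qed
  have midMD: "c x = MD" if "x \<in> S" "Min W < x" "x < j" for x
  proof -
    have xW: "x \<in> W" using A that by simp
    have "\<not> is_closing \<pi> x" using closing_iff[OF p W(1) xW] that W(3) by simp
    moreover have "\<not> is_opening \<pi> x" using opening_iff[OF p W(1) xW] that by simp
    ultimately show ?thesis using mm[OF \<open>x \<in> S\<close>] by simp
  qed
  have "fbi c S = Min W"
    unfolding fbi_def j_def[symmetric]
  proof (rule Max_eqI)
    show "finite {y\<in>S. y < j \<and> isOP (c y)}" using fS by simp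
    show "Min W \<in> {y\<in>S. y < j \<and> isOP (c y)}" using minS mlt W(3) opW by simp
    fix y assume y: "y \<in> {y\<in>S. y < j \<and> isOP (c y)}"
    show "y \<le> Min W"
    proof (rule ccontr)
      assume "\<not> y \<le> Min W"
      hence "c y = MD" using midMD y by simp
      thus False using y by (simp add: isOP_def)
    qed
  qed
  hence "{x\<in>S. fbi c S \<le> x \<and> x \<le> fbj c S} = W"
    using A WS fW W(3) by (auto simp: j_def)
  thus ?thesis using W(1) by simp
qed

lemma NCns_remove: "\<pi> \<in> NCns S \<Longrightarrow> W \<in> \<pi> \<Longrightarrow> \<pi> - {W} \<in> NCns (S - W)"
  using remove_block[of \<pi> S W] by (auto simp: NCns_def)

lemma matches_remove:
  assumes "\<pi> \<in> NCns S" "W \<in> \<pi>" "matches \<pi> c S"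
  shows "matches (\<pi> - {W}) c (S - W)"
  unfolding matches_def
proof (intro ballI)
  fix x assume x: "x \<in> S - W"
  have p: "partition_on S \<pi>" using assms(1) by (simp add: NCns_def NCs_def)
  have p': "partition_on (S - W) (\<pi> - {W})" using NCns_remove[OF assms(1,2)] by (simp add: NCns_def NCs_def)
  obtain B where B: "B \<in> \<pi> - {W}" "x \<in> B" using part_blk[OF p'] x by blast
  have "(is_closing \<pi> x \<longleftrightarrow> is_closing (\<pi> - {W}) x) \<and> (is_opening \<pi> x \<longleftrightarrow> is_opening (\<pi> - {W}) x)"
    using same_block_status[OF p p' _ B(1) B(2)] B(1) by simp
  thus "(c x = CL \<longleftrightarrow> is_closing (\<pi> - {W}) x) \<and>
        (c x = MD \<longleftrightarrow> \<not> is_closing (\<pi> - {W}) x \<and> \<not> is_opening (\<pi> - {W}) x)"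
    using assms(3) x by (auto simp: matches_def)
qed

lemma P2_inj: "finite S \<Longrightarrow> \<pi>1 \<in> NCns S \<Longrightarrow> \<pi>2 \<in> NCns S \<Longrightarrow> matches \<pi>1 c S \<Longrightarrow> matches \<pi>2 c S \<Longrightarrow> \<pi>1 = \<pi>2"
proof (induction "card S" arbitrary: S \<pi>1 \<pi>2 rule: less_induct)
  case less
  show ?case
  proof (cases "S = {}")
    case True thus ?thesis using less.prems by (simp add: NCns_def NCs_def partition_on_empty)
  next
    case False
    define W where "W = {x\<in>S. fbi c S \<le> x \<and> x \<le> fbj c S}"
    have W1: "W \<in> \<pi>1" and W2: "W \<in> \<pi>2"
      using first_block[OF less.prems(1) False] less.prems by (auto simp: W_def)
    have p1: "partition_on S \<pi>1" using less.prems by (simp add: NCns_def NCs_def)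
    have "W \<noteq> {}" using part_ne[OF p1 W1] .
    then obtain w where w: "w \<in> W" by blast
    have "W \<subseteq> S" using part_sub[OF p1 W1] .
    have cl: "card (S - W) < card S" using card_Diff_lt[OF less.prems(1) w] w \<open>W \<subseteq> S\<close> by blast
    have "\<pi>1 - {W} = \<pi>2 - {W}"
      using less.hyps[OF cl _ NCns_remove[OF less.prems(2) W1] NCns_remove[OF less.prems(3) W2]
          matches_remove[OF less.prems(2) W1 less.prems(4)] matches_remove[OF less.prems(3) W2 less.prems(5)]]
        less.prems(1) by simp
    thus ?thesis using W1 W2 by blast
  qed
qed


lemma htS_cards: "finite T \<Longrightarrow> htS c T = int (card {x\<in>T. c x = CL}) - int (card {x\<in>T. isOP (c x)})"
proof -
  assume fT: "finite T"
  have d: "dlt s = (if s = CL then 1 else 0) - (if isOP s then 1 else 0)" for s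
    by (cases s) (auto simp: isOP_def)
  have "htS c T = (\<Sum>x\<in>T. (if c x = CL then 1 else 0) - (if isOP (c x) then 1 else (0::int)))"
    unfolding htS_def using d by simp
  also have "\<dots> = (\<Sum>x\<in>T. if c x = CL then 1 else (0::int)) - (\<Sum>x\<in>T. if isOP (c x) then 1 else 0)"
    by (simp add: sum_subtractf)
  also have "(\<Sum>x\<in>T. if c x = CL then 1 else (0::int)) = int (card {x\<in>T. c x = CL})"
    using fT by (simp add: sum.inter_filter[symmetric])
  also have "(\<Sum>x\<in>T. if isOP (c x) then 1 else (0::int)) = int (card {x\<in>T. isOP (c x)})"
    using fT by (simp add: sum.inter_filter[symmetric])
  finally show ?thesis .
qed

lemma cnt:
  assumes fS: "finite S" and ns: "\<pi> \<in> NCns S" and m: "matches \<pi> c S"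
  shows "htS c {x\<in>S. P x} = int (card {B\<in>\<pi>. P (Max B)}) - int (card {B\<in>\<pi>. P (Min B)})"
proof -
  have p: "partition_on S \<pi>" and sg: "\<forall>B\<in>\<pi>. card B \<noteq> 1" using ns by (auto simp: NCns_def NCs_def)
  have mc: "\<And>x. x \<in> S \<Longrightarrow> c x = CL \<longleftrightarrow> is_closing \<pi> x"
    and mm: "\<And>x. x \<in> S \<Longrightarrow> c x = MD \<longleftrightarrow> \<not> is_closing \<pi> x \<and> \<not> is_opening \<pi> x"
    using m by (auto simp: matches_def)
  have fin: "finite B" "B \<noteq> {}" "Max B \<in> B" "Min B \<in> B" "B \<subseteq> S" "Min B < Max B" if "B \<in> \<pi>" for B
    using part_fin[OF fS p that] part_ne[OF p that] part_sub[OF p that] card_ne1_MinMax sg that by auto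
  have e1: "{x\<in>{x\<in>S. P x}. c x = CL} = Max ` {B\<in>\<pi>. P (Max B)}"
  proof
    show "{x\<in>{x\<in>S. P x}. c x = CL} \<subseteq> Max ` {B\<in>\<pi>. P (Max B)}"
    proof
      fix x assume x: "x \<in> {x\<in>{x\<in>S. P x}. c x = CL}"
      then obtain B where B: "B \<in> \<pi>" "x \<in> B" using part_blk[OF p] by blast
      have "x = Max B" using closing_iff[OF p B] mc x by auto
      thus "x \<in> Max ` {B\<in>\<pi>. P (Max B)}" using B x by auto
    qed
    show "Max ` {B\<in>\<pi>. P (Max B)} \<subseteq> {x\<in>{x\<in>S. P x}. c x = CL}"
    proof
      fix x assume "x \<in> Max ` {B\<in>\<pi>. P (Max B)}"
      then obtain B where B: "B \<in> \<pi>" "P (Max B)" "x = Max B" by auto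
      have "x \<in> B" using fin(3)[OF B(1)] B(3) by simp
      hence "x \<in> S" using fin(5)[OF B(1)] by blast
      have "is_closing \<pi> x" using closing_iff[OF p B(1) \<open>x \<in> B\<close>] B(3) by simp
      thus "x \<in> {x\<in>{x\<in>S. P x}. c x = CL}" using mc \<open>x \<in> S\<close> B by auto
    qed
  qed
  have e2: "{x\<in>{x\<in>S. P x}. isOP (c x)} = Min ` {B\<in>\<pi>. P (Min B)}"
  proof
    show "{x\<in>{x\<in>S. P x}. isOP (c x)} \<subseteq> Min ` {B\<in>\<pi>. P (Min B)}"
    proof
      fix x assume x: "x \<in> {x\<in>{x\<in>S. P x}. isOP (c x)}"
      then obtain B where B: "B \<in> \<pi>" "x \<in> B" using part_blk[OF p] by blast
      have "x = Min B" using opening_iff[OF p B] closing_iff[OF p B] mc mm x isOP_iff by auto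
      thus "x \<in> Min ` {B\<in>\<pi>. P (Min B)}" using B x by auto
    qed
    show "Min ` {B\<in>\<pi>. P (Min B)} \<subseteq> {x\<in>{x\<in>S. P x}. isOP (c x)}"
    proof
      fix x assume "x \<in> Min ` {B\<in>\<pi>. P (Min B)}"
      then obtain B where B: "B \<in> \<pi>" "P (Min B)" "x = Min B" by auto
      have xB: "x \<in> B" using fin(4)[OF B(1)] B(3) by simp
      hence "x \<in> S" using fin(5)[OF B(1)] by blast
      have "is_opening \<pi> x" "\<not> is_closing \<pi> x"
        using opening_iff[OF p B(1) xB] closing_iff[OF p B(1) xB] fin(6)[OF B(1)] B(3) by auto
      thus "x \<in> {x\<in>{x\<in>S. P x}. isOP (c x)}" using mc[OF \<open>x \<in> S\<close>] mm[OF \<open>x \<in> S\<close>] isOP_iff B \<open>x \<in> S\<close> by auto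
    qed
  qed
  have i1: "inj_on Max \<pi>"
  proof (rule inj_onI)
    fix A B assume "A \<in> \<pi>" "B \<in> \<pi>" "Max A = Max B"
    thus "A = B" using part_uniq[OF p] fin by metis
  qed
  have i2: "inj_on Min \<pi>"
  proof (rule inj_onI)
    fix A B assume "A \<in> \<pi>" "B \<in> \<pi>" "Min A = Min B"
    thus "A = B" using part_uniq[OF p] fin by metis
  qed
  have "htS c {x\<in>S. P x} = int (card (Max ` {B\<in>\<pi>. P (Max B)})) - int (card (Min ` {B\<in>\<pi>. P (Min B)}))"
    using htS_cards[of "{x\<in>S. P x}" c] fS e1 e2 by simp
  also have "card (Max ` {B\<in>\<pi>. P (Max B)}) = card {B\<in>\<pi>. P (Max B)}"
    by (rule card_image) (rule inj_on_subset[OF i1], auto)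
  also have "card (Min ` {B\<in>\<pi>. P (Min B)}) = card {B\<in>\<pi>. P (Min B)}"
    by (rule card_image) (rule inj_on_subset[OF i2], auto)
  finally show ?thesis .
qed

lemma cnt_cut:
  assumes fS: "finite S" and ns: "\<pi> \<in> NCns S" and m: "matches \<pi> c S"
  shows "htS c {x\<in>S. p < x} = int (card {B\<in>\<pi>. Min B \<le> p \<and> p < Max B})"
proof -
  have p: "partition_on S \<pi>" using ns by (auto simp: NCns_def NCs_def)
  have fp: "finite \<pi>" using part_finite[OF fS p] .
  have le: "Min B \<le> Max B" if "B \<in> \<pi>" for B using part_fin[OF fS p that] part_ne[OF p that] by simp
  have sub: "{B\<in>\<pi>. p < Min B} \<subseteq> {B\<in>\<pi>. p < Max B}" using le by force
  have "{B\<in>\<pi>. Min B \<le> p \<and> p < Max B} = {B\<in>\<pi>. p < Max B} - {B\<in>\<pi>. p < Min B}" by auto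
  hence "card {B\<in>\<pi>. Min B \<le> p \<and> p < Max B} = card {B\<in>\<pi>. p < Max B} - card {B\<in>\<pi>. p < Min B}"
    using card_Diff_subset[OF _ sub] fp by simp
  moreover have "card {B\<in>\<pi>. p < Min B} \<le> card {B\<in>\<pi>. p < Max B}"
    using card_mono[OF _ sub] fp by simp
  ultimately show ?thesis using cnt[OF fS ns m, of "\<lambda>x. p < x"] by simp
qed

lemma cnt_all:
  assumes fS: "finite S" and ns: "\<pi> \<in> NCns S" and m: "matches \<pi> c S"
  shows "htS c S = 0"
  using cnt[OF fS ns m, of "\<lambda>x. True"] by simp

definition stV :: "nat set set \<Rightarrow> nat set \<Rightarrow> nat \<Rightarrow> st4" where
  "stV \<rho> V i = (if is_closing \<rho> i then CL else if i = Min V then OF else if is_opening \<rho> i then OG else MD)"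

lemma stV_matches:
  assumes fV: "finite V" and r: "\<rho> \<in> NCns V"
  shows "matches \<rho> (stV \<rho> V) V"
  unfolding matches_def
proof (intro ballI)
  fix i assume i: "i \<in> V"
  have p: "partition_on V \<rho>" using r by (simp add: NCns_def NCs_def)
  obtain B where B: "B \<in> \<rho>" "i \<in> B" using part_blk[OF p i] by blast
  have "i = Min V \<Longrightarrow> is_opening \<rho> i"
  proof -
    assume e: "i = Min V"
    have "B \<subseteq> V" "finite B" using part_sub[OF p B(1)] part_fin[OF fV p B(1)] by auto
    hence "Min B = i" using e B(2) fV by (intro Min_eqI) auto
    thus ?thesis using opening_iff[OF p B] by simp
  qed
  thus "(stV \<rho> V i = CL \<longleftrightarrow> is_closing \<rho> i) \<and> (stV \<rho> V i = MD \<longleftrightarrow> \<not> is_closing \<rho> i \<and> \<not> is_opening \<rho> i)"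
    by (auto simp: stV_def)
qed

context fock begin

lemma NF:
  assumes fV: "finite V" and r: "\<rho> \<in> NCt V"
  shows "\<exists>\<alpha>. RW u (stV \<rho> V) (sl V) [] = Some (\<alpha>, [])"
proof -
  let ?c = "stV \<rho> V"
  have ns: "\<rho> \<in> NCns V" using r by (simp add: NCt_def)
  have p: "partition_on V \<rho>" and sg: "\<forall>B\<in>\<rho>. card B \<noteq> 1" using ns by (auto simp: NCns_def NCs_def)
  obtain B0 where B0: "B0 \<in> \<rho>" "Min V \<in> B0" "Max V \<in> B0" using r by (auto simp: NCt_def)
  have m: "matches \<rho> ?c V" using stV_matches[OF fV ns] .
  have fB: "finite B" "B \<noteq> {}" "B \<subseteq> V" if "B \<in> \<rho>" for B
    using part_fin[OF fV p that] part_ne[OF p that] part_sub[OF p that] by auto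
  have Vne: "V \<noteq> {}" using fB(2,3)[OF B0(1)] by blast
  have "RW u ?c (sl V) [] \<noteq> None"
    unfolding RWS_ok[OF fV]
  proof (intro ballI)
    fix q assume q: "q \<in> V"
    have h: "htS ?c {x\<in>V. q < x} = int (card {B\<in>\<rho>. Min B \<le> q \<and> q < Max B})"
      by (rule cnt_cut[OF fV ns m])
    obtain B where B: "B \<in> \<rho>" "q \<in> B" using part_blk[OF p q] by blast
    have fset: "finite {B\<in>\<rho>. Min B \<le> q \<and> q < Max B}" using part_finite[OF fV p] by simp
    show "reqR (?c q) \<le> int (length []) + htS ?c {x\<in>V. q < x}"
    proof (cases "is_closing \<rho> q")
      case True thus ?thesis using h by (simp add: stV_def)
    next
      case False
      hence "q \<noteq> Max B" using closing_iff[OF p B] by simp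
      moreover have "q \<le> Max B" using fB(1)[OF B(1)] B(2) by simp
      ultimately have qM: "q < Max B" by simp
      have qm: "Min B \<le> q" using fB[OF B(1)] B(2) by simp
      have Bin: "B \<in> {B\<in>\<rho>. Min B \<le> q \<and> q < Max B}" using B(1) qm qM by simp
      show ?thesis
      proof (cases "q \<noteq> Min V \<and> is_opening \<rho> q")
        case True
        have "Min B = q" using opening_iff[OF p B] True by simp
        have "B \<noteq> B0"
        proof
          assume "B = B0"
          hence "Min B \<le> Min V" using B0(2) fB[OF B0(1)] by simp
          moreover have "Min V \<le> Min B" using fB[OF B(1)] fV by (meson Min_antimono)
          ultimately show False using True \<open>Min B = q\<close> by simp
        qed
        have "Min B0 \<le> q" using B0(2) fB[OF B0(1)] q fV Min_le[OF fB(1)[OF B0(1)]]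
          by (meson Min_le dual_order.trans)
        moreover have "q < Max B0"
        proof -
          have "Max B \<le> Max V" using fB[OF B(1)] fV by (meson Max_mono)
          moreover have "Max V \<le> Max B0" using B0(3) fB[OF B0(1)] by simp
          ultimately show ?thesis using qM by simp
        qed
        ultimately have B0in: "B0 \<in> {B\<in>\<rho>. Min B \<le> q \<and> q < Max B}" using B0(1) by simp
        have "{B, B0} \<subseteq> {B\<in>\<rho>. Min B \<le> q \<and> q < Max B}" using Bin B0in by simp
        hence "card {B, B0} \<le> card {B\<in>\<rho>. Min B \<le> q \<and> q < Max B}" using card_mono[OF fset] by blast
        hence "2 \<le> card {B\<in>\<rho>. Min B \<le> q \<and> q < Max B}" using \<open>B \<noteq> B0\<close> by simp
        thus ?thesis using h False True by (simp add: stV_def)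
      next
        case False
        have "1 \<le> card {B\<in>\<rho>. Min B \<le> q \<and> q < Max B}"
          using Bin fset by (metis One_nat_def card_0_eq empty_iff less_one not_le)
        thus ?thesis using h False \<open>\<not> is_closing \<rho> q\<close> by (cases "q = Min V") (auto simp: stV_def)
      qed
    qed
  qed
  then obtain \<alpha> w where rw: "RW u ?c (sl V) [] = Some (\<alpha>, w)" by auto
  have "int (length w) = 0" using RWS_len[OF fV rw] cnt_all[OF fV ns m] by simp
  thus ?thesis using rw by auto
qed

lemma val_nz:
  assumes fS: "finite S" and v: "val u S c \<noteq> 0"
  shows "\<forall>p\<in>S. reqR (c p) \<le> htS c {x\<in>S. p < x}" and "htS c S = 0"
proof -
  obtain a where rw: "RW u c (sl S) [] = Some (a, [])" using v
    by (auto simp: val_def split: option.splits list.splits)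
  have "RW u c (sl S) [] \<noteq> None" using rw by simp
  thus "\<forall>p\<in>S. reqR (c p) \<le> htS c {x\<in>S. p < x}" unfolding RWS_ok[OF fS] by simp
  show "htS c S = 0" using RWS_len[OF fS rw] by simp
qed

lemma val_nz_valid: "finite S \<Longrightarrow> val u S c \<noteq> 0 \<Longrightarrow> valid c S"
proof -
  assume fS: "finite S" and v: "val u S c \<noteq> 0"
  have "req3 s \<le> reqR s" for s by (cases s) auto
  thus ?thesis using val_nz[OF fS v] unfolding valid_def by (meson order_trans)
qed

end

definition blk :: "nat set set \<Rightarrow> nat \<Rightarrow> nat set" where
  "blk \<sigma> i = (THE V. V \<in> \<sigma> \<and> i \<in> V)"

lemma blk_eq: "partition_on S \<sigma> \<Longrightarrow> V \<in> \<sigma> \<Longrightarrow> i \<in> V \<Longrightarrow> blk \<sigma> i = V"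
  unfolding blk_def by (rule the_equality) (auto dest: part_uniq)

definition comb :: "nat set set \<Rightarrow> (nat set \<Rightarrow> nat set set) \<Rightarrow> nat \<Rightarrow> st4" where
  "comb \<sigma> \<rho> i = stV (\<rho> (blk \<sigma> i)) (blk \<sigma> i) i"

lemma comb_on: "partition_on S \<sigma> \<Longrightarrow> V \<in> \<sigma> \<Longrightarrow> i \<in> V \<Longrightarrow> comb \<sigma> \<rho> i = stV (\<rho> V) V i"
  by (simp add: comb_def blk_eq)

definition Tup :: "nat set \<Rightarrow> (nat set set \<times> (nat set \<Rightarrow> nat set set)) set" where
  "Tup S = Sigma (NCs S) (\<lambda>\<sigma>. PiE \<sigma> NCt)"

lemma NCs_sub: "NCs S \<subseteq> Pow (Pow S)"
  by (auto simp: NCs_def dest: part_sub)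

lemma finite_NCs: "finite S \<Longrightarrow> finite (NCs S)"
  using NCs_sub finite_subset by (metis finite_Pow_iff)

lemma finite_NCt: "finite S \<Longrightarrow> finite (NCt S)"
  using finite_NCs[of S] by (rule finite_subset[rotated]) (auto simp: NCt_def NCns_def)

lemma finite_Tup: "finite S \<Longrightarrow> finite (Tup S)"
  unfolding Tup_def
  by (intro finite_SigmaI finite_NCs finite_PiE finite_NCt)
     (auto simp: NCs_def intro: part_finite part_fin)

lemma NCt_NCns: "\<rho> \<in> NCt V \<Longrightarrow> \<rho> \<in> NCns V" by (simp add: NCt_def)

lemma remove_tup:
  assumes "(\<sigma>, \<rho>) \<in> Tup S" "V \<in> \<sigma>"
  shows "(\<sigma> - {V}, restrict \<rho> (\<sigma> - {V})) \<in> Tup (S - V)"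
  using assms remove_block[of \<sigma> S V] by (auto simp: Tup_def)

lemma comb_remove:
  assumes "(\<sigma>, \<rho>) \<in> Tup S" "V \<in> \<sigma>" "i \<in> S - V"
  shows "comb (\<sigma> - {V}) (restrict \<rho> (\<sigma> - {V})) i = comb \<sigma> \<rho> i"
proof -
  have p: "partition_on S \<sigma>" using assms(1) by (simp add: Tup_def NCs_def)
  have p': "partition_on (S - V) (\<sigma> - {V})" using remove_tup[OF assms(1,2)] by (simp add: Tup_def NCs_def)
  obtain W where W: "W \<in> \<sigma> - {V}" "i \<in> W" using part_blk[OF p'] assms(3) by blast
  show ?thesis using comb_on[OF p' W] comb_on[OF p _ W(2)] W(1) by simp
qed

context fock begin

definition Kset :: "(nat \<Rightarrow> 'b) \<Rightarrow> nat set \<Rightarrow> complex" where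
  "Kset u V = (\<Sum>r\<in>NCt V. val u V (stV r V))"

lemma val_empty: "val u {} c = 1" by (simp add: val_def)

lemma factor:
  "finite S \<Longrightarrow> (\<sigma>, \<rho>) \<in> Tup S \<Longrightarrow> val u S (comb \<sigma> \<rho>) = (\<Prod>V\<in>\<sigma>. val u V (stV (\<rho> V) V))"
proof (induction "card S" arbitrary: S \<sigma> \<rho> rule: less_induct)
  case less
  have nc: "\<sigma> \<in> NCs S" and r: "\<rho> \<in> PiE \<sigma> NCt" using less.prems by (auto simp: Tup_def)
  have p: "partition_on S \<sigma>" using nc by (simp add: NCs_def)
  show ?case
  proof (cases "S = {}")
    case True
    hence "\<sigma> = {}" using p by (simp add: partition_on_empty)
    thus ?thesis using True by (simp add: val_empty)
  next
    case False
    obtain V where V: "V \<in> \<sigma>" "isint S V" using interval_block[OF less.prems(1) False nc] by blast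
    have VS: "V \<subseteq> S" and Vne: "V \<noteq> {}" and fV: "finite V"
      using part_sub[OF p V(1)] part_ne[OF p V(1)] part_fin[OF less.prems(1) p V(1)] by auto
    have rV: "\<rho> V \<in> NCt V" using r V(1) by auto
    obtain \<alpha> where a: "RW u (stV (\<rho> V) V) (sl V) [] = Some (\<alpha>, [])" using NF[OF fV rV] by blast
    have av: "val u V (stV (\<rho> V) V) = \<alpha>" by (simp add: val_def a)
    have "RW u (comb \<sigma> \<rho>) (sl V) [] = RW u (stV (\<rho> V) V) (sl V) []"
      by (rule RW_cong) (use comb_on[OF p V(1)] fV in simp)
    hence a2: "RW u (comb \<sigma> \<rho>) (sl V) [] = Some (\<alpha>, [])" using a by simp
    have seg: "val u S (comb \<sigma> \<rho>) = \<alpha> * val u (S - V) (comb \<sigma> \<rho>)"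
      by (rule segment[OF less.prems(1) VS Vne _ a2]) (use V(2) in \<open>simp add: isint_def\<close>)
    have t': "(\<sigma> - {V}, restrict \<rho> (\<sigma> - {V})) \<in> Tup (S - V)" using remove_tup[OF less.prems(2) V(1)] .
    have cl: "card (S - V) < card S"
      using Vne VS card_Diff_lt[OF less.prems(1)] by blast
    have "val u (S - V) (comb \<sigma> \<rho>) = val u (S - V) (comb (\<sigma> - {V}) (restrict \<rho> (\<sigma> - {V})))"
      by (rule val_cong) (use less.prems(1) comb_remove[OF less.prems(2) V(1)] in auto)
    also have "\<dots> = (\<Prod>W\<in>\<sigma> - {V}. val u W (stV (restrict \<rho> (\<sigma> - {V}) W) W))"
      using less.hyps[OF cl _ t'] less.prems(1) by simp
    also have "\<dots> = (\<Prod>W\<in>\<sigma> - {V}. val u W (stV (\<rho> W) W))"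
      by (rule prod.cong) auto
    finally have "val u S (comb \<sigma> \<rho>) = \<alpha> * (\<Prod>W\<in>\<sigma> - {V}. val u W (stV (\<rho> W) W))" using seg by simp
    moreover have "finite \<sigma>" using part_finite[OF less.prems(1) p] .
    ultimately show ?thesis using V(1) av by (simp add: prod.remove)
  qed
qed

end


definition piU :: "nat set set \<Rightarrow> (nat set \<Rightarrow> nat set set) \<Rightarrow> nat set set" where
  "piU \<sigma> \<rho> = (\<Union>V\<in>\<sigma>. \<rho> V)"

lemma piU_NCns:
  assumes fS: "finite S" and t: "(\<sigma>, \<rho>) \<in> Tup S"
  shows "piU \<sigma> \<rho> \<in> NCns S"
proof -
  have nc: "\<sigma> \<in> NCs S" and r: "\<And>V. V \<in> \<sigma> \<Longrightarrow> \<rho> V \<in> NCt V" using t by (auto simp: Tup_def)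
  have p: "partition_on S \<sigma>" and ncs: "noncrossing \<sigma>" using nc by (auto simp: NCs_def)
  have pV: "partition_on V (\<rho> V)" and ncV: "noncrossing (\<rho> V)" and sgV: "\<forall>B\<in>\<rho> V. card B \<noteq> 1"
    if "V \<in> \<sigma>" for V using r[OF that] by (auto simp: NCt_def NCns_def NCs_def)
  have BV: "B \<subseteq> V" if "V \<in> \<sigma>" "B \<in> \<rho> V" for V B using part_sub[OF pV[OF that(1)] that(2)] .
  have "partition_on S (piU \<sigma> \<rho>)"
  proof (rule partition_onI)
    show "\<Union> (piU \<sigma> \<rho>) = S"
    proof -
      have "\<Union> (piU \<sigma> \<rho>) = (\<Union>V\<in>\<sigma>. \<Union> (\<rho> V))" by (auto simp: piU_def)
      also have "\<dots> = (\<Union>V\<in>\<sigma>. V)" using pV by (auto simp: partition_on_def)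
      also have "\<dots> = S" using p by (auto simp: partition_on_def)
      finally show ?thesis .
    qed
    fix A B assume A: "A \<in> piU \<sigma> \<rho>" and B: "B \<in> piU \<sigma> \<rho>" and AB: "A \<noteq> B"
    obtain V where V: "V \<in> \<sigma>" "A \<in> \<rho> V" using A by (auto simp: piU_def)
    obtain W where W: "W \<in> \<sigma>" "B \<in> \<rho> W" using B by (auto simp: piU_def)
    show "disjnt A B"
    proof (cases "V = W")
      case True thus ?thesis using part_uniq[OF pV[OF V(1)] V(2)] W(2) AB by (auto simp: disjnt_def)
    next
      case False
      hence "V \<inter> W = {}" using part_uniq[OF p V(1) W(1)] by blast
      thus ?thesis using BV[OF V] BV[OF W] by (auto simp: disjnt_def)
    qed
  next
    show "{} \<notin> piU \<sigma> \<rho>" using pV by (auto simp: piU_def partition_on_def)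
  qed
  moreover have "noncrossing (piU \<sigma> \<rho>)"
    unfolding noncrossing_def
  proof (intro ballI impI notI)
    fix A B assume A: "A \<in> piU \<sigma> \<rho>" and B: "B \<in> piU \<sigma> \<rho>" and AB: "A \<noteq> B"
    assume "\<exists>a b c d. a < b \<and> b < c \<and> c < d \<and> a \<in> A \<and> c \<in> A \<and> b \<in> B \<and> d \<in> B"
    then obtain a b c d where o: "a < b" "b < c" "c < d" "a \<in> A" "c \<in> A" "b \<in> B" "d \<in> B" by blast
    obtain V where V: "V \<in> \<sigma>" "A \<in> \<rho> V" using A by (auto simp: piU_def)
    obtain W where W: "W \<in> \<sigma>" "B \<in> \<rho> W" using B by (auto simp: piU_def)
    show False
    proof (cases "V = W")
      case True thus False using ncD[OF ncV[OF V(1)] V(2) _ AB o] W(2) by simp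
    next
      case False thus False using ncD[OF ncs V(1) W(1) False o(1-3)] BV[OF V] BV[OF W] o(4-7) by blast
    qed
  qed
  moreover have "\<forall>B\<in>piU \<sigma> \<rho>. card B \<noteq> 1" using sgV by (auto simp: piU_def)
  ultimately show ?thesis by (simp add: NCns_def NCs_def)
qed

lemma piU_in: "V \<in> \<sigma> \<Longrightarrow> B \<in> \<rho> V \<Longrightarrow> B \<in> piU \<sigma> \<rho>"
  by (auto simp: piU_def)

lemma comb_min:
  assumes fS: "finite S" and t: "(\<sigma>, \<rho>) \<in> Tup S" and V: "V \<in> \<sigma>" and i: "i \<in> V"
  shows "comb \<sigma> \<rho> i = OF \<longleftrightarrow> i = Min V"
proof -
  have p: "partition_on S \<sigma>" and r: "\<rho> V \<in> NCt V" using t V by (auto simp: Tup_def NCs_def)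
  have fV: "finite V" using part_fin[OF fS p V] .
  have pV: "partition_on V (\<rho> V)" and sg: "\<forall>B\<in>\<rho> V. card B \<noteq> 1" using r by (auto simp: NCt_def NCns_def NCs_def)
  have "\<not> is_closing (\<rho> V) (Min V)"
  proof -
    have mV: "Min V \<in> V" using Min_in[OF fV] i by blast
    obtain B where B: "B \<in> \<rho> V" "Min V \<in> B" using part_blk[OF pV mV] by blast
    have fB: "finite B" "B \<noteq> {}" "B \<subseteq> V" using part_fin[OF fV pV B(1)] B part_sub[OF pV B(1)] by auto
    have "Min B = Min V" using fB B(2) fV by (intro Min_eqI) (auto)
    moreover have "Min B < Max B" using card_ne1_MinMax[OF fB(1,2)] sg B(1) by blast
    ultimately show ?thesis using closing_iff[OF pV B] by simp
  qed
  thus ?thesis using comb_on[OF p V i] by (auto simp: stV_def)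
qed

lemma OFs_eq:
  assumes fS: "finite S" and t: "(\<sigma>, \<rho>) \<in> Tup S"
  shows "{i\<in>S. comb \<sigma> \<rho> i = OF} = Min ` \<sigma>"
proof
  have p: "partition_on S \<sigma>" using t by (auto simp: Tup_def NCs_def)
  show "{i\<in>S. comb \<sigma> \<rho> i = OF} \<subseteq> Min ` \<sigma>"
  proof
    fix i assume i: "i \<in> {i\<in>S. comb \<sigma> \<rho> i = OF}"
    obtain V where V: "V \<in> \<sigma>" "i \<in> V" using part_blk[OF p] i by blast
    thus "i \<in> Min ` \<sigma>" using comb_min[OF fS t V] i by auto
  qed
  show "Min ` \<sigma> \<subseteq> {i\<in>S. comb \<sigma> \<rho> i = OF}"
  proof
    fix i assume "i \<in> Min ` \<sigma>"
    then obtain V where V: "V \<in> \<sigma>" "i = Min V" by auto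
    have "finite V" "V \<noteq> {}" "V \<subseteq> S" using part_fin[OF fS p V(1)] part_ne[OF p V(1)] part_sub[OF p V(1)] by auto
    hence iV: "i \<in> V" using V(2) Min_in by blast
    hence "i \<in> S" using \<open>V \<subseteq> S\<close> by blast
    thus "i \<in> {i\<in>S. comb \<sigma> \<rho> i = OF}" using comb_min[OF fS t V(1) iV] V(2) by simp
  qed
qed

lemma last_block:
  assumes fS: "finite S" and nc: "\<sigma> \<in> NCs S" and V: "V \<in> \<sigma>" and m: "Min V = Max (Min ` \<sigma>)"
  shows "isint S V"
  unfolding isint_def
proof (intro ballI impI)
  have p: "partition_on S \<sigma>" and ncs: "noncrossing \<sigma>" using nc by (auto simp: NCs_def)
  have fin: "finite W" "W \<noteq> {}" if "W \<in> \<sigma>" for W using part_fin[OF fS p that] part_ne[OF p that] by auto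
  have fs: "finite \<sigma>" using part_finite[OF fS p] .
  fix x assume x: "x \<in> S" "Min V \<le> x \<and> x \<le> Max V"
  show "x \<in> V"
  proof (rule ccontr)
    assume xV: "x \<notin> V"
    obtain W where W: "W \<in> \<sigma>" "x \<in> W" using part_blk[OF p x(1)] by blast
    have WV: "W \<noteq> V" using W xV by auto
    have mnV: "Min V \<in> V" and mxV: "Max V \<in> V" using fin[OF V] by auto
    have lt: "Min V < x" "x < Max V" using x xV mnV mxV by (auto simp: le_less)
    have yin: "Min V < y" if y: "y \<in> W" for y
    proof -
      have "y \<noteq> Min V" "y \<noteq> Max V" using part_uniq[OF p W(1) V] y mnV mxV WV by metis+
      moreover have False if "y < Min V"
        using ncD[OF ncs W(1) V WV that lt(1) lt(2) y W(2) mnV mxV] .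
      moreover have False if "Max V < y"
        using ncD[OF ncs V W(1) WV[symmetric] lt(1) lt(2) that mnV mxV W(2) y] .
      ultimately show ?thesis using not_less_iff_gr_or_eq by blast
    qed
    have "Min W \<in> W" using fin[OF W(1)] by simp
    hence "Min V < Min W" using yin by blast
    moreover have "Min W \<le> Max (Min ` \<sigma>)" using fs W(1) by simp
    ultimately show False using m by simp
  qed
qed

lemma rho_eq:
  assumes fS: "finite S" and t: "(\<sigma>, \<rho>) \<in> Tup S" and V: "V \<in> \<sigma>"
  shows "\<rho> V = {B \<in> piU \<sigma> \<rho>. B \<subseteq> V}"
proof
  have p: "partition_on S \<sigma>" and r: "\<And>W. W \<in> \<sigma> \<Longrightarrow> \<rho> W \<in> NCt W" using t by (auto simp: Tup_def NCs_def)
  have pW: "partition_on W (\<rho> W)" if "W \<in> \<sigma>" for W using r[OF that] by (simp add: NCt_def NCns_def NCs_def)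
  show "\<rho> V \<subseteq> {B \<in> piU \<sigma> \<rho>. B \<subseteq> V}" using piU_in[OF V] part_sub[OF pW[OF V]] by auto
  show "{B \<in> piU \<sigma> \<rho>. B \<subseteq> V} \<subseteq> \<rho> V"
  proof
    fix B assume B: "B \<in> {B \<in> piU \<sigma> \<rho>. B \<subseteq> V}"
    then obtain W where W: "W \<in> \<sigma>" "B \<in> \<rho> W" by (auto simp: piU_def)
    have "B \<noteq> {}" "B \<subseteq> W" using part_ne[OF pW[OF W(1)] W(2)] part_sub[OF pW[OF W(1)] W(2)] by auto
    then obtain b where "b \<in> B" "b \<in> W" by blast
    hence "W = V" using part_uniq[OF p W(1) V] B by blast
    thus "B \<in> \<rho> V" using W by simp
  qed
qed

lemma matches_cong: "(\<And>i. i \<in> S \<Longrightarrow> c i = c' i) \<Longrightarrow> matches \<pi> c S \<longleftrightarrow> matches \<pi> c' S"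
  by (simp add: matches_def)

lemma piU_matches:
  assumes fS: "finite S" and t: "(\<sigma>, \<rho>) \<in> Tup S"
  shows "matches (piU \<sigma> \<rho>) (comb \<sigma> \<rho>) S"
  unfolding matches_def
proof (intro ballI)
  fix i assume i: "i \<in> S"
  have p: "partition_on S \<sigma>" and r: "\<And>W. W \<in> \<sigma> \<Longrightarrow> \<rho> W \<in> NCt W" using t by (auto simp: Tup_def NCs_def)
  obtain V where V: "V \<in> \<sigma>" "i \<in> V" using part_blk[OF p i] by blast
  have fV: "finite V" using part_fin[OF fS p V(1)] .
  have nsV: "\<rho> V \<in> NCns V" using r[OF V(1)] by (simp add: NCt_def)
  have pV: "partition_on V (\<rho> V)" using nsV by (simp add: NCns_def NCs_def)
  obtain B where B: "B \<in> \<rho> V" "i \<in> B" using part_blk[OF pV V(2)] by blast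
  have pU: "partition_on S (piU \<sigma> \<rho>)" using piU_NCns[OF fS t] by (simp add: NCns_def NCs_def)
  have st: "(is_closing (\<rho> V) i \<longleftrightarrow> is_closing (piU \<sigma> \<rho>) i) \<and> (is_opening (\<rho> V) i \<longleftrightarrow> is_opening (piU \<sigma> \<rho>) i)"
    using same_block_status[OF pV pU B(1) piU_in[of V \<sigma> B \<rho>, OF V(1) B(1)] B(2)] .
  have "matches (\<rho> V) (stV (\<rho> V) V) V" using stV_matches[OF fV nsV] .
  hence "(stV (\<rho> V) V i = CL \<longleftrightarrow> is_closing (\<rho> V) i) \<and>
         (stV (\<rho> V) V i = MD \<longleftrightarrow> \<not> is_closing (\<rho> V) i \<and> \<not> is_opening (\<rho> V) i)"
    using V(2) by (simp add: matches_def)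
  thus "(comb \<sigma> \<rho> i = CL \<longleftrightarrow> is_closing (piU \<sigma> \<rho>) i) \<and>
        (comb \<sigma> \<rho> i = MD \<longleftrightarrow> \<not> is_closing (piU \<sigma> \<rho>) i \<and> \<not> is_opening (piU \<sigma> \<rho>) i)"
    using st comb_on[OF p V] by simp
qed


lemma Tup_empty: "Tup {} = {({}, \<lambda>_. undefined)}"
  by (auto simp: Tup_def NCs_def partition_on_empty noncrossing_def)

lemma comb_inj:
  "finite S \<Longrightarrow> (\<sigma>1, \<rho>1) \<in> Tup S \<Longrightarrow> (\<sigma>2, \<rho>2) \<in> Tup S \<Longrightarrow> (\<forall>i\<in>S. comb \<sigma>1 \<rho>1 i = comb \<sigma>2 \<rho>2 i)
   \<Longrightarrow> \<sigma>1 = \<sigma>2 \<and> \<rho>1 = \<rho>2"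
proof (induction "card S" arbitrary: S \<sigma>1 \<rho>1 \<sigma>2 \<rho>2 rule: less_induct)
  case less
  note fS = less.prems(1) and t1 = less.prems(2) and t2 = less.prems(3) and eq = less.prems(4)
  show ?case
  proof (cases "S = {}")
    case True thus ?thesis using t1 t2 by (simp add: Tup_empty)
  next
    case False
    have nc1: "\<sigma>1 \<in> NCs S" and nc2: "\<sigma>2 \<in> NCs S" using t1 t2 by (auto simp: Tup_def)
    have p1: "partition_on S \<sigma>1" and p2: "partition_on S \<sigma>2" using nc1 nc2 by (auto simp: NCs_def)
    let ?c = "comb \<sigma>1 \<rho>1"
    have m1: "matches (piU \<sigma>1 \<rho>1) ?c S" using piU_matches[OF fS t1] .
    have m2: "matches (piU \<sigma>2 \<rho>2) ?c S" using piU_matches[OF fS t2] matches_cong[of S ?c "comb \<sigma>2 \<rho>2"] eq by auto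
    have \<pi>eq: "piU \<sigma>1 \<rho>1 = piU \<sigma>2 \<rho>2"
      using P2_inj[OF fS piU_NCns[OF fS t1] piU_NCns[OF fS t2] m1 m2] .
    define \<pi> where "\<pi> = piU \<sigma>1 \<rho>1"
    have OF1: "{i\<in>S. ?c i = OF} = Min ` \<sigma>1" using OFs_eq[OF fS t1] .
    have "{i\<in>S. ?c i = OF} = {i\<in>S. comb \<sigma>2 \<rho>2 i = OF}" using eq by auto
    hence OF2: "{i\<in>S. ?c i = OF} = Min ` \<sigma>2" using OFs_eq[OF fS t2] by simp
    have fs1: "finite \<sigma>1" using part_finite[OF fS p1] .
    have ne1: "\<sigma>1 \<noteq> {}" using p1 False by (auto simp: partition_on_def)
    define i0 where "i0 = Max (Min ` \<sigma>1)"
    have "i0 \<in> Min ` \<sigma>1" using fs1 ne1 by (simp add: i0_def)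
    then obtain V1 where V1: "V1 \<in> \<sigma>1" "Min V1 = i0" by auto
    have i0': "i0 = Max (Min ` \<sigma>2)" using OF1 OF2 by (simp add: i0_def)
    have "i0 \<in> Min ` \<sigma>2" using OF1 OF2 \<open>i0 \<in> Min ` \<sigma>1\<close> by simp
    then obtain V2 where V2: "V2 \<in> \<sigma>2" "Min V2 = i0" by auto
    have int1: "isint S V1" using last_block[OF fS nc1 V1(1)] V1(2) i0_def by simp
    have int2: "isint S V2" using last_block[OF fS nc2 V2(1)] V2(2) i0' by simp
    have key: "Max V = Max B" if t: "(\<sigma>, \<rho>) \<in> Tup S" and V: "V \<in> \<sigma>" and B: "B \<in> piU \<sigma> \<rho>" "Min V \<in> B" for \<sigma> \<rho> V B
    proof -
      have p: "partition_on S \<sigma>" and r: "\<rho> V \<in> NCt V" using t V by (auto simp: Tup_def NCs_def)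
      have fV: "finite V" using part_fin[OF fS p V] .
      obtain B' where B': "B' \<in> \<rho> V" "Min V \<in> B'" "Max V \<in> B'" using r by (auto simp: NCt_def)
      have pU: "partition_on S (piU \<sigma> \<rho>)" using piU_NCns[OF fS t] by (simp add: NCns_def NCs_def)
      have "B' = B" using part_uniq[OF pU piU_in[of V \<sigma> B' \<rho>, OF V B'(1)] B(1) B'(2) B(2)] .
      moreover have pV: "partition_on V (\<rho> V)" using r by (simp add: NCt_def NCns_def NCs_def)
      have "B' \<subseteq> V" "finite B'" using part_sub[OF pV B'(1)] part_fin[OF fV pV B'(1)] by auto
      hence "Max B' = Max V" using B'(3) fV by (intro Max_eqI) auto
      ultimately show ?thesis by simp
    qed
    have i0S: "i0 \<in> S" using V1 part_sub[OF p1 V1(1)] part_fin[OF fS p1 V1(1)] part_ne[OF p1 V1(1)]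
      by (metis Min_in subsetD)
    have pU: "partition_on S \<pi>" using piU_NCns[OF fS t1] by (simp add: \<pi>_def NCns_def NCs_def)
    obtain B where B: "B \<in> \<pi>" "i0 \<in> B" using part_blk[OF pU i0S] by blast
    have mx1: "Max V1 = Max B" using key[OF t1 V1(1)] B V1(2) by (simp add: \<pi>_def)
    have mx2: "Max V2 = Max B" using key[OF t2 V2(1)] B V2(2) \<pi>eq by (simp add: \<pi>_def)
    have setI: "V = {x\<in>S. Min V \<le> x \<and> x \<le> Max V}" if "isint S V" "V \<in> \<sigma>" "partition_on S \<sigma>" for V \<sigma>
    proof
      have "finite V" "V \<subseteq> S" using part_fin[OF fS that(3,2)] part_sub[OF that(3,2)] by auto
      thus "V \<subseteq> {x\<in>S. Min V \<le> x \<and> x \<le> Max V}" by auto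
      show "{x\<in>S. Min V \<le> x \<and> x \<le> Max V} \<subseteq> V" using that(1) by (auto simp: isint_def)
    qed
    have VV: "V1 = V2" using setI[OF int1 V1(1) p1] setI[OF int2 V2(1) p2] V1(2) V2(2) mx1 mx2 by simp
    define I where "I = V1"
    have I1: "I \<in> \<sigma>1" and I2: "I \<in> \<sigma>2" using V1 V2 VV by (auto simp: I_def)
    have rI: "\<rho>1 I = \<rho>2 I" using rho_eq[OF fS t1 I1] rho_eq[OF fS t2 I2] \<pi>eq by simp
    have Ine: "I \<noteq> {}" "I \<subseteq> S" using part_ne[OF p1 I1] part_sub[OF p1 I1] by auto
    then obtain w where w: "w \<in> I" "w \<in> S" by blast
    have cl: "card (S - I) < card S" using card_Diff_lt[OF fS w(1) w(2)] .
    have t1': "(\<sigma>1 - {I}, restrict \<rho>1 (\<sigma>1 - {I})) \<in> Tup (S - I)" using remove_tup[OF t1 I1] .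
    have t2': "(\<sigma>2 - {I}, restrict \<rho>2 (\<sigma>2 - {I})) \<in> Tup (S - I)" using remove_tup[OF t2 I2] .
    have eq': "\<forall>i\<in>S - I. comb (\<sigma>1 - {I}) (restrict \<rho>1 (\<sigma>1 - {I})) i = comb (\<sigma>2 - {I}) (restrict \<rho>2 (\<sigma>2 - {I})) i"
      using comb_remove[OF t1 I1] comb_remove[OF t2 I2] eq by simp
    have IH: "\<sigma>1 - {I} = \<sigma>2 - {I} \<and> restrict \<rho>1 (\<sigma>1 - {I}) = restrict \<rho>2 (\<sigma>2 - {I})"
      using less.hyps[OF cl _ t1' t2' eq'] fS by blast
    have s: "\<sigma>1 = \<sigma>2" using IH I1 I2 by blast
    have r1: "\<rho>1 \<in> PiE \<sigma>1 NCt" and r2: "\<rho>2 \<in> PiE \<sigma>2 NCt" using t1 t2 by (auto simp: Tup_def)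
    have "\<rho>1 = \<rho>2"
    proof
      fix W show "\<rho>1 W = \<rho>2 W"
      proof (cases "W \<in> \<sigma>1")
        case True
        show ?thesis
        proof (cases "W = I")
          case True thus ?thesis using rI by simp
        next
          case False
          have Win: "W \<in> \<sigma>1 - {I}" "W \<in> \<sigma>2 - {I}" using False \<open>W \<in> \<sigma>1\<close> s by auto
          have "restrict \<rho>1 (\<sigma>1 - {I}) W = restrict \<rho>2 (\<sigma>2 - {I}) W"
            using conjunct2[OF IH] by (rule fun_cong)
          thus ?thesis using Win by (metis restrict_apply')
        qed
      next
        case False thus ?thesis using r1 r2 s by (auto simp: PiE_def extensional_def)
      qed
    qed
    thus ?thesis using s by simp
  qed
qed


context fock begin

lemma comb_surj:
  "finite S \<Longrightarrow> val u S c \<noteq> 0 \<Longrightarrow> \<exists>\<sigma> \<rho>. (\<sigma>, \<rho>) \<in> Tup S \<and> (\<forall>i\<in>S. comb \<sigma> \<rho> i = c i)"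
proof (induction "card S" arbitrary: S c rule: less_induct)
  case less
  note fS = less.prems(1) and v = less.prems(2)
  show ?case
  proof (cases "S = {}")
    case True thus ?thesis by (simp add: Tup_empty)
  next
    case False
    have req: "\<forall>p\<in>S. reqR (c p) \<le> htS c {x\<in>S. p < x}" using val_nz[OF fS v] by simp
    obtain \<pi> where \<pi>: "\<pi> \<in> NCns S" "matches \<pi> c S" using P2_surj[OF fS val_nz_valid[OF fS v]] by blast
    have p: "partition_on S \<pi>" and nc: "noncrossing \<pi>" and sg: "\<forall>B\<in>\<pi>. card B \<noteq> 1"
      using \<pi>(1) by (auto simp: NCns_def NCs_def)
    have mc: "\<And>x. x \<in> S \<Longrightarrow> c x = CL \<longleftrightarrow> is_closing \<pi> x"
      and mm: "\<And>x. x \<in> S \<Longrightarrow> c x = MD \<longleftrightarrow> \<not> is_closing \<pi> x \<and> \<not> is_opening \<pi> x"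
      using \<pi>(2) by (auto simp: matches_def)
    have fin: "finite B" "B \<noteq> {}" "B \<subseteq> S" "Min B \<in> B" "Max B \<in> B" "Min B < Max B" if "B \<in> \<pi>" for B
      using part_fin[OF fS p that] part_ne[OF p that] part_sub[OF p that] card_ne1_MinMax sg that by auto
    define m0 where "m0 = Min S"
    have m0S: "m0 \<in> S" using fS False by (simp add: m0_def)
    obtain B0 where B0: "B0 \<in> \<pi>" "m0 \<in> B0" using part_blk[OF p m0S] by blast
    have mB0: "Min B0 = m0" using fin[OF B0(1)] B0(2) fS by (intro Min_eqI) (auto simp: m0_def)
    have "is_opening \<pi> m0" "\<not> is_closing \<pi> m0"
      using opening_iff[OF p B0] closing_iff[OF p B0] mB0 fin(6)[OF B0(1)] by auto
    hence opm0: "isOP (c m0)" using mc[OF m0S] mm[OF m0S] isOP_iff by blast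
    have "card {B\<in>\<pi>. Min B \<le> m0 \<and> m0 < Max B} \<le> 1"
    proof -
      have "{B\<in>\<pi>. Min B \<le> m0 \<and> m0 < Max B} \<subseteq> {B0}"
      proof
        fix B assume B: "B \<in> {B\<in>\<pi>. Min B \<le> m0 \<and> m0 < Max B}"
        have "Min B \<in> S" using fin[OF conjunct1[OF B[simplified]]] by blast
        hence "m0 \<le> Min B" using fS by (simp add: m0_def)
        hence "Min B = m0" using B by simp
        hence "m0 \<in> B" using fin B by auto
        thus "B \<in> {B0}" using part_uniq[OF p _ B0(1) _ B0(2)] B by auto
      qed
      hence "card {B\<in>\<pi>. Min B \<le> m0 \<and> m0 < Max B} \<le> card {B0}" by (intro card_mono) simp_all
      thus ?thesis by simp
    qed
    hence "reqR (c m0) \<le> 1" using req m0S cnt_cut[OF fS \<pi>] by fastforce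
    hence cm0: "c m0 = OF" using opm0 by (cases "c m0") (auto simp: isOP_def)
    let ?OF = "{x\<in>S. c x = OF}"
    have OFne: "?OF \<noteq> {}" using m0S cm0 by blast
    have fOF: "finite ?OF" using fS by simp
    define i0 where "i0 = Max ?OF"
    have i0S: "i0 \<in> S" and ci0: "c i0 = OF" using Max_in[OF fOF OFne] by (auto simp: i0_def)
    have i0max: "\<And>x. x \<in> S \<Longrightarrow> c x = OF \<Longrightarrow> x \<le> i0" using fOF by (auto simp: i0_def)
    obtain B where B: "B \<in> \<pi>" "i0 \<in> B" using part_blk[OF p i0S] by blast
    have "\<not> is_closing \<pi> i0" "is_opening \<pi> i0" using mc[OF i0S] mm[OF i0S] ci0 by auto
    hence mB: "Min B = i0" using opening_iff[OF p B] by simp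
    define I where "I = {x\<in>S. i0 \<le> x \<and> x \<le> Max B}"
    have BI: "B \<subseteq> I" using fin[OF B(1)] mB by (auto simp: I_def)
    have IS: "I \<subseteq> S" and fI: "finite I" using fS by (auto simp: I_def)
    have i0I: "i0 \<in> I" using BI B(2) by blast
    have MI: "Max B \<in> I" using BI fin(5)[OF B(1)] by blast
    have minI: "Min I = i0" using fI i0I by (intro Min_eqI) (auto simp: I_def)
    have maxI: "Max I = Max B" using fI MI by (intro Max_eqI) (auto simp: I_def)
    have claim: "C \<subseteq> I" if C: "C \<in> \<pi>" and x: "x \<in> C" "x \<in> I" for C x
    proof (cases "C = B")
      case True thus ?thesis using BI by simp
    next
      case False
      have xi: "i0 < x" "x < Max B"
      proof -
        have "x \<noteq> i0" "x \<noteq> Max B" using part_uniq[OF p C B(1)] x(1) B(2) fin(5)[OF B(1)] False by metis+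
        thus "i0 < x" "x < Max B" using x(2) by (auto simp: I_def)
      qed
      show ?thesis
      proof
        fix y assume y: "y \<in> C"
        have yS: "y \<in> S" using fin(3)[OF C] y by blast
        have a1: "\<not> y < i0"
        proof
          assume "y < i0"
          show False using ncD[OF nc C B(1) False \<open>y < i0\<close> xi(1) xi(2) y x(1) B(2) fin(5)[OF B(1)]] .
        qed
        have a2: "\<not> Max B < y"
        proof
          assume "Max B < y"
          show False using ncD[OF nc B(1) C False[symmetric] xi(1) xi(2) \<open>Max B < y\<close> B(2) fin(5)[OF B(1)] x(1) y] .
        qed
        show "y \<in> I" using yS a1 a2 by (simp add: I_def not_less)
      qed
    qed
    define \<rho>I where "\<rho>I = {C\<in>\<pi>. C \<subseteq> I}"
    have pI: "partition_on I \<rho>I"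
    proof (rule partition_onI)
      show "\<Union> \<rho>I = I"
      proof
        show "\<Union> \<rho>I \<subseteq> I" by (auto simp: \<rho>I_def)
        show "I \<subseteq> \<Union> \<rho>I"
        proof
          fix x assume x: "x \<in> I"
          obtain C where C: "C \<in> \<pi>" "x \<in> C" using part_blk[OF p] IS x by blast
          thus "x \<in> \<Union> \<rho>I" using claim[OF C x] by (auto simp: \<rho>I_def)
        qed
      qed
      fix A C assume "A \<in> \<rho>I" "C \<in> \<rho>I" "A \<noteq> C"
      thus "disjnt A C" using part_uniq[OF p] by (auto simp: \<rho>I_def disjnt_def)
    next
      show "{} \<notin> \<rho>I" using fin by (auto simp: \<rho>I_def)
    qed
    have rI: "\<rho>I \<in> NCt I"
    proof -
      have "noncrossing \<rho>I" using nc_subset[OF nc] by (auto simp: \<rho>I_def)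
      moreover have "\<forall>C\<in>\<rho>I. card C \<noteq> 1" using sg by (auto simp: \<rho>I_def)
      moreover have "B \<in> \<rho>I" using B(1) BI by (simp add: \<rho>I_def)
      ultimately show ?thesis using pI B(2) fin(5)[OF B(1)] minI maxI
        by (auto simp: NCt_def NCns_def NCs_def)
    qed
    have agree: "stV \<rho>I I x = c x" if x: "x \<in> I" for x
    proof -
      have xS: "x \<in> S" using x IS by blast
      obtain C where C: "C \<in> \<rho>I" "x \<in> C" using part_blk[OF pI x] by blast
      have Cp: "C \<in> \<pi>" using C(1) by (simp add: \<rho>I_def)
      have st: "(is_closing \<rho>I x \<longleftrightarrow> is_closing \<pi> x) \<and> (is_opening \<rho>I x \<longleftrightarrow> is_opening \<pi> x)"
        using same_block_status[OF pI p C(1) Cp C(2)] .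
      show ?thesis
      proof (cases "is_closing \<pi> x")
        case True thus ?thesis using st mc[OF xS] by (simp add: stV_def)
      next
        case False
        show ?thesis
        proof (cases "x = i0")
          case True thus ?thesis using False st ci0 minI by (simp add: stV_def)
        next
          case False
          have "i0 \<le> x" using x by (simp add: I_def)
          hence "c x \<noteq> OF" using i0max[OF xS] False by force
          thus ?thesis using \<open>\<not> is_closing \<pi> x\<close> st mc[OF xS] mm[OF xS] False minI
            by (cases "c x") (auto simp: stV_def)
        qed
      qed
    qed
    obtain \<alpha> where a: "RW u (stV \<rho>I I) (sl I) [] = Some (\<alpha>, [])" using NF[OF fI rI] by blast
    have "RW u c (sl I) [] = RW u (stV \<rho>I I) (sl I) []"
      by (rule RW_cong) (use agree fI in simp)
    hence a2: "RW u c (sl I) [] = Some (\<alpha>, [])" using a by simp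
    have Ine: "I \<noteq> {}" using i0I by blast
    have isI: "\<forall>x\<in>S. Min I \<le> x \<and> x \<le> Max I \<longrightarrow> x \<in> I" using minI maxI by (auto simp: I_def)
    have seg: "val u S c = \<alpha> * val u (S - I) c" by (rule segment[OF fS IS Ine isI a2])
    have v': "val u (S - I) c \<noteq> 0" using v seg by simp
    have cl: "card (S - I) < card S" using card_Diff_lt[OF fS i0I i0S] .
    obtain \<sigma>' \<rho>' where t': "(\<sigma>', \<rho>') \<in> Tup (S - I)" and c': "\<forall>i\<in>S - I. comb \<sigma>' \<rho>' i = c i"
      using less.hyps[OF cl _ v'] fS by blast
    have nc': "\<sigma>' \<in> NCs (S - I)" and r': "\<rho>' \<in> PiE \<sigma>' NCt" using t' by (auto simp: Tup_def)
    have p': "partition_on (S - I) \<sigma>'" using nc' by (simp add: NCs_def)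
    have SS: "(S - I) \<union> I = S" using IS by blast
    have ncS: "insert I \<sigma>' \<in> NCs S"
      using insert_block[OF nc' Ine fI _ ] SS isI by (auto simp: isint_def)
    have Inot: "I \<notin> \<sigma>'" using part_sub[OF p'] Ine by blast
    have rS: "\<rho>'(I := \<rho>I) \<in> PiE (insert I \<sigma>') NCt" using PiE_fun_upd[OF rI r'] .
    have tS: "(insert I \<sigma>', \<rho>'(I := \<rho>I)) \<in> Tup S" using ncS rS by (simp add: Tup_def)
    have pS: "partition_on S (insert I \<sigma>')" using ncS by (simp add: NCs_def)
    have "\<forall>i\<in>S. comb (insert I \<sigma>') (\<rho>'(I := \<rho>I)) i = c i"
    proof
      fix i assume iS: "i \<in> S"
      show "comb (insert I \<sigma>') (\<rho>'(I := \<rho>I)) i = c i"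
      proof (cases "i \<in> I")
        case True thus ?thesis using comb_on[OF pS _ True] agree by simp
      next
        case False
        obtain W where W: "W \<in> \<sigma>'" "i \<in> W" using part_blk[OF p'] iS False by blast
        have "W \<noteq> I" using W Inot by auto
        have "comb \<sigma>' \<rho>' i = c i" using c' iS False by blast
        hence "stV (\<rho>' W) W i = c i" using comb_on[OF p' W] by simp
        thus ?thesis using comb_on[OF pS _ W(2)] W(1) \<open>W \<noteq> I\<close> by simp
      qed
    qed
    thus ?thesis using tS by blast
  qed
qed

lemma MC: "finite S \<Longrightarrow> Mx u S = (\<Sum>\<sigma>\<in>NCs S. \<Prod>V\<in>\<sigma>. Kset u V)"
proof -
  assume fS: "finite S"
  define F where "F = (\<lambda>(\<sigma>, \<rho>). restrict (comb \<sigma> \<rho>) S)"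
  have inj: "inj_on F (Tup S)"
  proof (rule inj_onI, clarify)
    fix \<sigma>1 \<rho>1 \<sigma>2 \<rho>2 assume t1: "(\<sigma>1, \<rho>1) \<in> Tup S" and t2: "(\<sigma>2, \<rho>2) \<in> Tup S"
      and e: "F (\<sigma>1, \<rho>1) = F (\<sigma>2, \<rho>2)"
    have "\<forall>i\<in>S. comb \<sigma>1 \<rho>1 i = comb \<sigma>2 \<rho>2 i"
    proof
      fix i assume "i \<in> S"
      thus "comb \<sigma>1 \<rho>1 i = comb \<sigma>2 \<rho>2 i" using fun_cong[OF e, of i] by (simp add: F_def)
    qed
    thus "\<sigma>1 = \<sigma>2 \<and> \<rho>1 = \<rho>2" using comb_inj[OF fS t1 t2] by blast
  qed
  have sub: "F ` Tup S \<subseteq> PiE S (\<lambda>_. UNIV)" by (auto simp: F_def)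
  have zero: "\<forall>c\<in>PiE S (\<lambda>_. UNIV) - F ` Tup S. val u S c = 0"
  proof (intro ballI, rule ccontr)
    fix c assume c: "c \<in> PiE S (\<lambda>_. UNIV) - F ` Tup S" and v: "val u S c \<noteq> 0"
    obtain \<sigma> \<rho> where t: "(\<sigma>, \<rho>) \<in> Tup S" and e: "\<forall>i\<in>S. comb \<sigma> \<rho> i = c i"
      using comb_surj[OF fS v] by blast
    have "F (\<sigma>, \<rho>) = c"
    proof
      fix i show "F (\<sigma>, \<rho>) i = c i"
        using e c by (cases "i \<in> S") (auto simp: F_def PiE_def extensional_def)
    qed
    thus False using c t by blast
  qed
  have fP: "finite (PiE S (\<lambda>_. UNIV :: st4 set))" using fS by (simp add: finite_PiE)
  have "Mx u S = (\<Sum>c\<in>PiE S (\<lambda>_. UNIV). val u S c)" using Mx_expand[OF fS] .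
  also have "\<dots> = (\<Sum>c\<in>F ` Tup S. val u S c)"
    by (rule sum.mono_neutral_right[OF fP sub zero])
  also have "\<dots> = (\<Sum>x\<in>Tup S. val u S (F x))" by (simp add: sum.reindex[OF inj])
  also have "\<dots> = (\<Sum>(\<sigma>, \<rho>)\<in>Tup S. \<Prod>V\<in>\<sigma>. val u V (stV (\<rho> V) V))"
  proof (rule sum.cong[OF refl], clarify)
    fix \<sigma> \<rho> assume t: "(\<sigma>, \<rho>) \<in> Tup S"
    have "val u S (F (\<sigma>, \<rho>)) = val u S (comb \<sigma> \<rho>)"
      by (rule val_cong[OF fS]) (simp add: F_def)
    thus "val u S (F (\<sigma>, \<rho>)) = (\<Prod>V\<in>\<sigma>. val u V (stV (\<rho> V) V))" using factor[OF fS t] by simp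
  qed
  also have "\<dots> = (\<Sum>\<sigma>\<in>NCs S. \<Sum>\<rho>\<in>PiE \<sigma> NCt. \<Prod>V\<in>\<sigma>. val u V (stV (\<rho> V) V))"
    unfolding Tup_def
  proof (rule sum.Sigma[symmetric])
    show "finite (NCs S)" using finite_NCs[OF fS] .
    show "\<forall>\<sigma>\<in>NCs S. finite (PiE \<sigma> NCt)"
    proof
      fix \<sigma> assume "\<sigma> \<in> NCs S"
      hence p: "partition_on S \<sigma>" by (simp add: NCs_def)
      show "finite (PiE \<sigma> NCt)"
        by (rule finite_PiE[OF part_finite[OF fS p]]) (rule finite_NCt, rule part_fin[OF fS p])
    qed
  qed
  also have "\<dots> = (\<Sum>\<sigma>\<in>NCs S. \<Prod>V\<in>\<sigma>. Kset u V)"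
  proof (rule sum.cong[OF refl])
    fix \<sigma> assume "\<sigma> \<in> NCs S"
    hence p: "partition_on S \<sigma>" by (simp add: NCs_def)
    have "(\<Prod>V\<in>\<sigma>. \<Sum>r\<in>NCt V. val u V (stV r V)) = (\<Sum>g\<in>PiE \<sigma> NCt. \<Prod>V\<in>\<sigma>. val u V (stV (g V) V))"
      by (rule prod_sum_PiE) (auto intro: part_finite[OF fS p] finite_NCt part_fin[OF fS p])
    thus "(\<Sum>\<rho>\<in>PiE \<sigma> NCt. \<Prod>V\<in>\<sigma>. val u V (stV (\<rho> V) V)) = (\<Prod>V\<in>\<sigma>. Kset u V)"
      by (simp add: Kset_def)
  qed
  finally show ?thesis .
qed

end

declare cumulant.simps[simp del]

lemma sm_reflect:
  assumes sm: "\<forall>x\<in>A. \<forall>y\<in>A. x < y \<longrightarrow> h x < (h y :: nat)" and "x \<in> A" "y \<in> A" "h x < h y"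
  shows "(x::nat) < y"
  using assms by (metis not_less_iff_gr_or_eq)

lemma sm_inj: "\<forall>x\<in>A. \<forall>y\<in>A. x < y \<longrightarrow> h x < (h y :: nat) \<Longrightarrow> inj_on h (A :: nat set)"
  by (rule inj_onI) (metis not_less_iff_gr_or_eq)

lemma image_NCs:
  assumes sm: "\<forall>x\<in>A. \<forall>y\<in>A. x < y \<longrightarrow> h x < (h y :: nat)" and \<pi>: "\<pi> \<in> NCs (A :: nat set)"
  shows "(`) h ` \<pi> \<in> NCs (h ` A)"
proof -
  have p: "partition_on A \<pi>" and nc: "noncrossing \<pi>" using \<pi> by (auto simp: NCs_def)
  have inj: "inj_on h A" using sm_inj[OF sm] .
  have "partition_on (h ` A) ((`) h ` \<pi> - {{}})" by (rule partition_on_inj_image[OF p inj])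
  moreover have "(`) h ` \<pi> - {{}} = (`) h ` \<pi>" using part_ne[OF p] by auto
  ultimately have p': "partition_on (h ` A) ((`) h ` \<pi>)" by simp
  have "noncrossing ((`) h ` \<pi>)"
    unfolding noncrossing_def
  proof (intro ballI impI notI)
    fix V' W' assume V': "V' \<in> (`) h ` \<pi>" and W': "W' \<in> (`) h ` \<pi>" and ne: "V' \<noteq> W'"
    obtain V where V: "V \<in> \<pi>" "V' = h ` V" using V' by auto
    obtain W where W: "W \<in> \<pi>" "W' = h ` W" using W' by auto
    have VW: "V \<noteq> W" using ne V W by auto
    assume "\<exists>a b c d. a < b \<and> b < c \<and> c < d \<and> a \<in> V' \<and> c \<in> V' \<and> b \<in> W' \<and> d \<in> W'"
    then obtain a b c d where o: "a < b" "b < c" "c < d" "a \<in> V'" "c \<in> V'" "b \<in> W'" "d \<in> W'" by blast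
    obtain a0 where a0: "a0 \<in> V" "a = h a0" using o V by auto
    obtain c0 where c0: "c0 \<in> V" "c = h c0" using o V by auto
    obtain b0 where b0: "b0 \<in> W" "b = h b0" using o W by auto
    obtain d0 where d0: "d0 \<in> W" "d = h d0" using o W by auto
    have inA: "a0 \<in> A" "b0 \<in> A" "c0 \<in> A" "d0 \<in> A"
      using part_sub[OF p V(1)] part_sub[OF p W(1)] a0 b0 c0 d0 by auto
    have "h a0 < h b0" "h b0 < h c0" "h c0 < h d0" using o a0 b0 c0 d0 by simp_all
    hence "a0 < b0" "b0 < c0" "c0 < d0"
      using sm_reflect[OF sm inA(1) inA(2)] sm_reflect[OF sm inA(2) inA(3)] sm_reflect[OF sm inA(3) inA(4)] by simp_all
    thus False using ncD[OF nc V(1) W(1) VW] a0 b0 c0 d0 by blast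
  qed
  thus ?thesis using p' by (simp add: NCs_def)
qed

lemma sl_nth_facts:
  assumes fV: "finite V"
  shows "\<forall>x\<in>{0..<card V}. \<forall>y\<in>{0..<card V}. x < y \<longrightarrow> sl V ! x < sl V ! y"
    and "(!) (sl V) ` {0..<card V} = V"
proof -
  have so: "sorted_wrt (<) (sl V)" by (simp add: strict_sorted_list_of_set)
  show "\<forall>x\<in>{0..<card V}. \<forall>y\<in>{0..<card V}. x < y \<longrightarrow> sl V ! x < sl V ! y"
    using sorted_wrt_nth_less[OF so] by simp
  have "set (sl V) = V" using fV by simp
  moreover have "(!) xs ` {0..<length xs} = set xs" for xs :: "nat list"
  proof
    show "(!) xs ` {0..<length xs} \<subseteq> set xs" by auto
    show "set xs \<subseteq> (!) xs ` {0..<length xs}"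
    proof
      fix x assume "x \<in> set xs"
      then obtain i where "i < length xs" "xs ! i = x" by (auto simp: in_set_conv_nth)
      thus "x \<in> (!) xs ` {0..<length xs}" by force
    qed
  qed
  ultimately show "(!) (sl V) ` {0..<card V} = V" by (metis length_sorted_list_of_set)
qed

lemma NC_transfer:
  assumes fV: "finite V"
  shows "bij_betw ((`) ((`) ((!) (sl V)))) (NC (card V)) (NCs V)"
proof -
  define f where "f = (!) (sl V)"
  define k where "k = card V"
  have smf: "\<forall>x\<in>{0..<k}. \<forall>y\<in>{0..<k}. x < y \<longrightarrow> f x < f y" using sl_nth_facts(1)[OF fV] by (simp add: f_def k_def)
  have imf: "f ` {0..<k} = V" using sl_nth_facts(2)[OF fV] by (simp add: f_def k_def)
  have injf: "inj_on f {0..<k}" using sm_inj[OF smf] .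
  define g where "g = the_inv_into {0..<k} f"
  have gf: "g (f x) = x" if "x \<in> {0..<k}" for x using the_inv_into_f_f[OF injf that] by (simp add: g_def)
  have fg: "f (g y) = y" if "y \<in> V" for y using f_the_inv_into_f[OF injf] imf that by (simp add: g_def)
  have gV: "g y \<in> {0..<k}" if "y \<in> V" for y
  proof -
    have "y \<in> f ` {0..<k}" using imf that by simp
    thus ?thesis unfolding g_def by (rule the_inv_into_into[OF injf _ subset_refl])
  qed
  have img: "g ` V = {0..<k}"
  proof
    show "g ` V \<subseteq> {0..<k}" using gV by auto
    show "{0..<k} \<subseteq> g ` V" using gf imf by (metis image_eqI image_subsetI subsetI)
  qed
  have smg: "\<forall>x\<in>V. \<forall>y\<in>V. x < y \<longrightarrow> g x < g y"
  proof (intro ballI impI)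
    fix x y assume x: "x \<in> V" and y: "y \<in> V" and xy: "x < y"
    show "g x < g y"
    proof (rule ccontr)
      assume "\<not> g x < g y"
      hence "g y \<le> g x" by simp
      hence "g y < g x \<or> g y = g x" by auto
      hence "f (g y) < f (g x) \<or> f (g y) = f (g x)" using smf gV x y by auto
      thus False using fg x y xy by auto
    qed
  qed
  have NCk: "NC k = NCs {0..<k}" by (simp add: NC_def NCs_def)
  show ?thesis
    unfolding f_def[symmetric] k_def[symmetric] NCk
  proof (rule bij_betw_byWitness[where f' = "(`) ((`) g)"])
    show "\<forall>\<pi>\<in>NCs {0..<k}. (`) g ` (`) f ` \<pi> = \<pi>"
    proof
      fix \<pi> assume "\<pi> \<in> NCs {0..<k}"
      hence p: "partition_on {0..<k} \<pi>" by (simp add: NCs_def)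
      have "g ` f ` B = B" if "B \<in> \<pi>" for B
        using part_sub[OF p that] gf by (force simp: image_image)
      thus "(`) g ` (`) f ` \<pi> = \<pi>" by (simp add: image_image)
    qed
    show "\<forall>\<sigma>\<in>NCs V. (`) f ` (`) g ` \<sigma> = \<sigma>"
    proof
      fix \<sigma> assume "\<sigma> \<in> NCs V"
      hence p: "partition_on V \<sigma>" by (simp add: NCs_def)
      have "f ` g ` B = B" if "B \<in> \<sigma>" for B
        using part_sub[OF p that] fg by (force simp: image_image)
      thus "(`) f ` (`) g ` \<sigma> = \<sigma>" by (simp add: image_image)
    qed
    show "(`) ((`) f) ` NCs {0..<k} \<subseteq> NCs V" using image_NCs[OF smf] imf by auto
    show "(`) ((`) g) ` NCs V \<subseteq> NCs {0..<k}" using image_NCs[OF smg] img by auto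
  qed
qed

lemma nths_sl:
  assumes fV: "finite V" and W: "W \<subseteq> {0..<card V}"
  shows "nths (sl V) W = sl ((!) (sl V) ` W)"
proof (rule sorted_distinct_set_unique)
  show "sorted (nths (sl V) W)" by (rule sorted_nths) simp
  show "distinct (nths (sl V) W)" by simp
  have fW: "finite W" using W finite_subset by blast
  have "set (sl ((!) (sl V) ` W)) = (!) (sl V) ` W" using fW by simp
  moreover have "set (nths (sl V) W) = (!) (sl V) ` W"
  proof -
    have "set (nths (sl V) W) = {sl V ! i | i. i < card V \<and> i \<in> W}" using fV by (simp add: set_nths)
    also have "\<dots> = (!) (sl V) ` W" using W by force
    finally show ?thesis .
  qed
  ultimately show "set (nths (sl V) W) = set (sl ((!) (sl V) ` W))" by simp
qed simp_all

lemma block_proper: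
  assumes "\<pi> \<in> NC k" "\<pi> \<noteq> {{0..<k}}" "W \<in> \<pi>"
  shows "W \<subset> {0..<k}"
proof -
  have p: "partition_on {0..<k} \<pi>" using assms(1) by (simp add: NC_def)
  have sub: "W \<subseteq> {0..<k}" using part_sub[OF p assms(3)] .
  moreover have "W \<noteq> {0..<k}"
  proof
    assume e: "W = {0..<k}"
    have "\<pi> = {W}"
    proof
      show "{W} \<subseteq> \<pi>" using assms(3) by simp
      show "\<pi> \<subseteq> {W}"
      proof
        fix B assume B: "B \<in> \<pi>"
        obtain b where "b \<in> B" using part_ne[OF p B] by blast
        moreover have "b \<in> W" using part_sub[OF p B] \<open>b \<in> B\<close> e by blast
        ultimately show "B \<in> {W}" using part_uniq[OF p B assms(3)] by blast
      qed
    qed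
    thus False using e assms(2) by simp
  qed
  ultimately show ?thesis by blast
qed

lemma NCt_empty: "NCt {} = {}"
  by (auto simp: NCt_def NCns_def NCs_def partition_on_empty)

lemma NCt_single: "NCt {x} = {}"
proof -
  have "False" if r: "\<rho> \<in> NCt {x}" for \<rho>
  proof -
    have p: "partition_on {x} \<rho>" and sg: "\<forall>B\<in>\<rho>. card B \<noteq> 1" using r by (auto simp: NCt_def NCns_def NCs_def)
    obtain B where "B \<in> \<rho>" "x \<in> B" using part_blk[OF p] by blast
    hence "B = {x}" using part_sub[OF p \<open>B \<in> \<rho>\<close>] by auto
    thus False using sg \<open>B \<in> \<rho>\<close> by auto
  qed
  thus ?thesis by blast
qed

context fock begin

lemma Mx_empty: "Mx u {} = 1"
  by (simp add: Mx_def vstate_Lg vac_def cf0_def)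

lemma cum:
  "finite V \<Longrightarrow> cumulant (vstate sc st \<phi> \<gamma>) (map (\<lambda>i. Xop sc \<phi> \<gamma> \<Lambda> (u i)) (sl V)) = Kset u V"
proof (induction "card V" arbitrary: V rule: less_induct)
  case less
  note fV = less.prems
  define Ys where "Ys = map (\<lambda>i. Xop sc \<phi> \<gamma> \<Lambda> (u i)) (sl V)"
  define k where "k = card V"
  define f where "f = (!) (sl V)"
  have lY: "length Ys = k" using fV by (simp add: Ys_def k_def)
  let ?\<psi> = "vstate sc st \<phi> \<gamma>"
  have c0: "cumulant ?\<psi> Ys = ?\<psi> (opprod Ys) -
     (\<Sum>\<pi> \<in> NC k - {{{0..<k}}}. \<Prod>V\<in>\<pi>. (if V \<subset> {0..<k} then cumulant ?\<psi> (nths Ys V) else 0))"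
    by (subst cumulant.simps) (simp add: lY)
  have mx: "?\<psi> (opprod Ys) = Mx u V" by (simp add: Mx_def Ys_def)
  have inner: "(\<Prod>W\<in>\<pi>. (if W \<subset> {0..<k} then cumulant ?\<psi> (nths Ys W) else 0)) = (\<Prod>W\<in>\<pi>. Kset u (f ` W))"
    if \<pi>: "\<pi> \<in> NC k - {{{0..<k}}}" for \<pi>
  proof (rule prod.cong[OF refl])
    fix W assume W: "W \<in> \<pi>"
    have Wp: "W \<subset> {0..<k}" using block_proper[of \<pi> k W] \<pi> W by auto
    have "nths Ys W = map (\<lambda>i. Xop sc \<phi> \<gamma> \<Lambda> (u i)) (sl (f ` W))"
      using nths_sl[OF fV, of W] Wp by (simp add: Ys_def nths_map f_def k_def)
    moreover have "card (f ` W) < card V"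
    proof -
      have "inj_on f {0..<k}" using sm_inj[OF sl_nth_facts(1)[OF fV]] by (simp add: f_def k_def)
      hence "card (f ` W) = card W" using Wp by (meson card_image inj_on_subset psubset_imp_subset)
      also have "\<dots> < card {0..<k}" using Wp by (intro psubset_card_mono) auto
      finally show ?thesis by (simp add: k_def)
    qed
    moreover have "finite (f ` W)" using Wp by (meson finite_atLeastLessThan finite_imageI finite_subset psubset_imp_subset)
    ultimately have "cumulant ?\<psi> (nths Ys W) = Kset u (f ` W)"
      using less.hyps[of "f ` W"] by simp
    thus "(if W \<subset> {0..<k} then cumulant ?\<psi> (nths Ys W) else 0) = Kset u (f ` W)"
      using Wp by simp
  qed
  have tr: "(\<Sum>\<pi>\<in>NC k. \<Prod>W\<in>\<pi>. Kset u (f ` W)) = (\<Sum>\<sigma>\<in>NCs V. \<Prod>W\<in>\<sigma>. Kset u W)"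
  proof -
    have bij: "bij_betw ((`) ((`) f)) (NC k) (NCs V)" using NC_transfer[OF fV] by (simp add: f_def k_def)
    have injf: "inj_on f {0..<k}" using sm_inj[OF sl_nth_facts(1)[OF fV]] by (simp add: f_def k_def)
    have "(\<Sum>\<sigma>\<in>NCs V. \<Prod>W\<in>\<sigma>. Kset u W) = (\<Sum>\<pi>\<in>NC k. \<Prod>W\<in>(`) f ` \<pi>. Kset u W)"
      using sum.reindex_bij_betw[OF bij, of "\<lambda>\<sigma>. \<Prod>W\<in>\<sigma>. Kset u W"] by simp
    also have "\<dots> = (\<Sum>\<pi>\<in>NC k. \<Prod>W\<in>\<pi>. Kset u (f ` W))"
    proof (rule sum.cong[OF refl])
      fix \<pi> assume "\<pi> \<in> NC k"
      hence p: "partition_on {0..<k} \<pi>" by (simp add: NC_def)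
      have "inj_on ((`) f) \<pi>"
      proof (rule inj_onI)
        fix A B assume A: "A \<in> \<pi>" and B: "B \<in> \<pi>" and e: "f ` A = f ` B"
        show "A = B" using inj_on_image_eq_iff[OF injf part_sub[OF p A] part_sub[OF p B]] e by simp
      qed
      thus "(\<Prod>W\<in>(`) f ` \<pi>. Kset u W) = (\<Prod>W\<in>\<pi>. Kset u (f ` W))" by (simp add: prod.reindex)
    qed
    finally show ?thesis by simp
  qed
  have fNC: "finite (NC k)" using finite_NCs[of "{0..<k}"] by (simp add: NC_def NCs_def)
  show ?case
  proof (cases "k = 0")
    case True
    hence V0: "V = {}" using fV by (simp add: k_def)
    have "NC k - {{{0..<k}}} = {{}}" using True by (auto simp: NC_def partition_on_empty noncrossing_def)
    hence "cumulant ?\<psi> Ys = 0" using c0 mx V0 Mx_empty by simp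
    thus ?thesis using V0 by (simp add: Ys_def Kset_def NCt_empty)
  next
    case False
    have one: "{{0..<k}} \<in> NC k" using False
      by (simp add: NC_def partition_on_space noncrossing_def)
    have "(\<Sum>\<pi> \<in> NC k - {{{0..<k}}}. \<Prod>W\<in>\<pi>. Kset u (f ` W))
          = (\<Sum>\<pi>\<in>NC k. \<Prod>W\<in>\<pi>. Kset u (f ` W)) - Kset u (f ` {0..<k})"
      using sum_diff1[OF fNC, of "\<lambda>\<pi>. \<Prod>W\<in>\<pi>. Kset u (f ` W)"] one by simp
    moreover have "f ` {0..<k} = V" using sl_nth_facts(2)[OF fV] by (simp add: f_def k_def)
    ultimately have s1: "(\<Sum>\<pi> \<in> NC k - {{{0..<k}}}. \<Prod>W\<in>\<pi>. Kset u (f ` W)) = Mx u V - Kset u V"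
      using tr MC[OF fV] by simp
    have s2: "(\<Sum>\<pi> \<in> NC k - {{{0..<k}}}. \<Prod>W\<in>\<pi>. (if W \<subset> {0..<k} then cumulant ?\<psi> (nths Ys W) else 0))
        = Mx u V - Kset u V"
      by (rule trans[OF sum.cong[OF refl inner] s1])
    have "cumulant ?\<psi> Ys = Mx u V - (Mx u V - Kset u V)" unfolding c0 mx s2 ..
    thus ?thesis by (simp add: Ys_def)
  qed
qed

lemma WC_ops:
  assumes "1 \<le> k"
  shows "WC sc \<phi> \<gamma> \<Lambda> k \<pi> u = ops u (stV \<pi> {0..<k}) [0..<k]"
proof -
  have m: "Min {0..<k} = 0" using assms by (intro Min_eqI) auto
  have "(if is_closing \<pi> i then a_plus (u i) else if i = 0 then a_tilde_phi sc \<phi> (u i)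
         else if is_opening \<pi> i then a_tilde_gamma \<gamma> (u i) else a_zero \<Lambda> (u i)) = opw (stV \<pi> {0..<k} i) (u i)" for i
    by (simp add: stV_def m opw_CL opw_MD opw_OG opw_OF)
  thus ?thesis by (simp add: WC_def ops_def)
qed

lemma Kset_WC:
  assumes "1 \<le> n"
  shows "Kset u {0..<n} = (\<Sum>\<pi>\<in>NC_tilde_ns n. vstate sc st \<phi> \<gamma> (WC sc \<phi> \<gamma> \<Lambda> n \<pi> u))"
proof -
  have m: "Min {0..<n} = 0" and M: "Max {0..<n} = n - 1" using assms by (auto intro: Min_eqI Max_eqI)
  have e: "NC_tilde_ns n = NCt {0..<n}"
    by (simp add: NC_tilde_ns_def NCt_def NCns_def NCs_def NC_def m M)
  have "vstate sc st \<phi> \<gamma> (WC sc \<phi> \<gamma> \<Lambda> n \<pi> u) = val u {0..<n} (stV \<pi> {0..<n})" for \<pi>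
    by (simp add: WC_ops[OF assms] vstate_Lg vac_def Lg_cf0_ops val_def)
  thus ?thesis by (simp add: Kset_def e)
qed

end

theorem proposition3p7:
  fixes sc :: "complex \<Rightarrow> 'b::ring_1 \<Rightarrow> 'b"
    and st :: "'b \<Rightarrow> 'b"
    and \<phi> :: "'b \<Rightarrow> complex"
    and \<gamma> :: "'b \<Rightarrow> 'b"
    and \<Lambda> :: "'b \<Rightarrow> 'b \<Rightarrow> 'b"
    and n :: nat
    and u :: "nat \<Rightarrow> 'b"
  assumes alg: "unital_star_algebra sc st"
    and phi_lin: "Vector_Spaces.linear sc (*) \<phi>"
    and phi_star: "\<forall>b. \<phi> (st b) = cnj (\<phi> b)"
    and phi_pos: "\<forall>b. \<phi> (st b * b) \<in> \<real> \<and> 0 \<le> Re (\<phi> (st b * b))"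
    and phi_faithful: "\<forall>b. \<phi> (st b * b) = 0 \<longrightarrow> b = 0"
    and gamma_lin: "Vector_Spaces.linear sc sc \<gamma>"
    and gamma_star: "\<forall>b. \<gamma> (st b) = st (\<gamma> b)"
    and Lambda_lin1: "\<forall>v. Vector_Spaces.linear sc sc (\<lambda>b. \<Lambda> b v)"
    and Lambda_lin2: "\<forall>b. Vector_Spaces.linear sc sc (\<Lambda> b)"
    and Lambda_star: "\<forall>b v. \<Lambda> (st b) (st v) = st (\<Lambda> b v)"
    and cp: "completely_positive st (gpp sc \<phi> \<gamma>)"
    and phi_sym: "\<forall>b v w. \<phi> (st v * \<Lambda> b w) = \<phi> (st (\<Lambda> (st b) v) * w)"
    and gamma_sym: "\<forall>b v w. \<gamma> (st v * \<Lambda> b w) = \<gamma> (st (\<Lambda> (st b) v) * w)"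
  shows "(2 \<le> n \<longrightarrow>
           cumulant (vstate sc st \<phi> \<gamma>) (map (\<lambda>i. Xop sc \<phi> \<gamma> \<Lambda> (u i)) [0..<n]) =
           (\<Sum>\<pi>\<in>NC_tilde_ns n. vstate sc st \<phi> \<gamma> (WC sc \<phi> \<gamma> \<Lambda> n \<pi> u)))
       \<and> cumulant (vstate sc st \<phi> \<gamma>) [Xop sc \<phi> \<gamma> \<Lambda> (u 0)] = 0"
proof -
  have vs: "vector_space sc" and mlr: "\<forall>c x y. sc c (x * y) = sc c x * y \<and> sc c (x * y) = x * sc c y"
    using alg unfolding unital_star_algebra_def by blast+
  have ml: "\<And>c x y. sc c (x * y) = sc c x * y" and mr: "\<And>c x y. sc c (x * y) = x * sc c y"
    using mlr by blast+
  have va: "\<And>a x y. sc a (x + y) = sc a x + sc a y" "\<And>a b x. sc (a + b) x = sc a x + sc b x"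
    "\<And>a b x. sc a (sc b x) = sc (a * b) x" "\<And>x. sc 1 x = x"
    using vector_space.vector_space_assms[OF vs] by auto
  have mp: "module_hom sc (*) \<phi>" using phi_lin by (simp add: module_hom_iff_linear)
  have mg: "module_hom sc sc \<gamma>" using gamma_lin by (simp add: module_hom_iff_linear)
  have mL: "module_hom sc sc (\<Lambda> b)" for b using Lambda_lin2 by (simp add: module_hom_iff_linear)
  interpret F: fock sc st \<phi> \<gamma> \<Lambda>
  proof
    show "\<phi> (x + y) = \<phi> x + \<phi> y" for x y using module_hom.add[OF mp] .
    show "\<phi> (sc a x) = a * \<phi> x" for a x using module_hom.scale[OF mp] .
    show "\<gamma> (x + y) = \<gamma> x + \<gamma> y" for x y using module_hom.add[OF mg] .
    show "\<gamma> (sc a x) = sc a (\<gamma> x)" for a x using module_hom.scale[OF mg] .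
    show "\<Lambda> bb (x + y) = \<Lambda> bb x + \<Lambda> bb y" for bb x y using module_hom.add[OF mL] .
    show "\<Lambda> bb (sc a x) = sc a (\<Lambda> bb x)" for bb a x using module_hom.scale[OF mL] .
  qed (use va ml mr in auto)
  have c: "cumulant (vstate sc st \<phi> \<gamma>) (map (\<lambda>i. Xop sc \<phi> \<gamma> \<Lambda> (u i)) [0..<m]) = F.Kset u {0..<m}" for m
    using F.cum[of "{0..<m}" u] by simp
  have "cumulant (vstate sc st \<phi> \<gamma>) [Xop sc \<phi> \<gamma> \<Lambda> (u 0)] = F.Kset u {0..<1}"
    using c[of 1] by simp
  also have "\<dots> = 0" by (simp add: F.Kset_def NCt_single)
  finally have one: "cumulant (vstate sc st \<phi> \<gamma>) [Xop sc \<phi> \<gamma> \<Lambda> (u 0)] = 0" .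
  have two: "2 \<le> n \<longrightarrow>
           cumulant (vstate sc st \<phi> \<gamma>) (map (\<lambda>i. Xop sc \<phi> \<gamma> \<Lambda> (u i)) [0..<n]) =
           (\<Sum>\<pi>\<in>NC_tilde_ns n. vstate sc st \<phi> \<gamma> (WC sc \<phi> \<gamma> \<Lambda> n \<pi> u))"
    using c[of n] F.Kset_WC[of n u] by simp
  show ?thesis using one two by blast
qed

end
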